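(* There is an absolute constant $D>0$ such that for every prime power $q$, every positive integer $n$, and every $A\in\Lambda(n,\mathbb{F}_q)$ with $\mathrm{rank}(A)>\frac23 n$, the number of isotropic spaces of $A$ (subspaces $U\le\mathbb{F}_q^n$ with $u^tAu'=0$ for all $u,u'\in U$) is at most $q^{\frac16 n^2+Dn}$.
   Context: $\Lambda(n,\mathbb{F}_q)$ is the space of $n\times n$ alternating matrices over $\mathbb{F}_q$. *)

theory Defs
  imports "HOL-Algebra.Ring" "HOL-Algebra.Ring_Divisibility" Complex_Main
begin

text \<open>The finite field F_q is an HOL-Algebra field R whose carrier is a finite set of
naturals (every finite field is isomorphic to such an R, and q = card (carrier R)).
Vectors of F_q^n are functions nat => nat with entries in the carrier at indices < n and
equal to zero at indices >= n; n x n matrices are functions nat => nat => nat, only the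
entries with indices < n being relevant.\<close>

definition vecs :: "nat ring \<Rightarrow> nat \<Rightarrow> (nat \<Rightarrow> nat) set" where
  "vecs R n = {v. (\<forall>i<n. v i \<in> carrier R) \<and> (\<forall>i\<ge>n. v i = \<zero>\<^bsub>R\<^esub>)}"

definition vzero :: "nat ring \<Rightarrow> nat \<Rightarrow> nat" where
  "vzero R = (\<lambda>i. \<zero>\<^bsub>R\<^esub>)"

definition vadd :: "nat ring \<Rightarrow> (nat \<Rightarrow> nat) \<Rightarrow> (nat \<Rightarrow> nat) \<Rightarrow> nat \<Rightarrow> nat" where
  "vadd R u v = (\<lambda>i. u i \<oplus>\<^bsub>R\<^esub> v i)"

definition vsmult :: "nat ring \<Rightarrow> nat \<Rightarrow> (nat \<Rightarrow> nat) \<Rightarrow> nat \<Rightarrow> nat" where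
  "vsmult R c u = (\<lambda>i. c \<otimes>\<^bsub>R\<^esub> u i)"

definition alt_matrix :: "nat ring \<Rightarrow> nat \<Rightarrow> (nat \<Rightarrow> nat \<Rightarrow> nat) \<Rightarrow> bool" where
  "alt_matrix R n A \<longleftrightarrow>
     (\<forall>i<n. \<forall>j<n. A i j \<in> carrier R) \<and>
     (\<forall>i<n. A i i = \<zero>\<^bsub>R\<^esub>) \<and>
     (\<forall>i<n. \<forall>j<n. A j i = \<ominus>\<^bsub>R\<^esub> (A i j))"

definition cols_indep :: "nat ring \<Rightarrow> nat \<Rightarrow> (nat \<Rightarrow> nat \<Rightarrow> nat) \<Rightarrow> nat set \<Rightarrow> bool" where
  "cols_indep R n A J \<longleftrightarrow>
     (\<forall>c. (\<forall>j\<in>J. c j \<in> carrier R) \<longrightarrow>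
          (\<forall>i<n. (\<Oplus>\<^bsub>R\<^esub> j\<in>J. c j \<otimes>\<^bsub>R\<^esub> A i j) = \<zero>\<^bsub>R\<^esub>) \<longrightarrow>
          (\<forall>j\<in>J. c j = \<zero>\<^bsub>R\<^esub>))"

definition mat_rank :: "nat ring \<Rightarrow> nat \<Rightarrow> (nat \<Rightarrow> nat \<Rightarrow> nat) \<Rightarrow> nat" where
  "mat_rank R n A = Max {card J | J. J \<subseteq> {..<n} \<and> cols_indep R n A J}"

definition bilin :: "nat ring \<Rightarrow> nat \<Rightarrow> (nat \<Rightarrow> nat \<Rightarrow> nat) \<Rightarrow> (nat \<Rightarrow> nat) \<Rightarrow> (nat \<Rightarrow> nat) \<Rightarrow> nat" where
  "bilin R n A u v = (\<Oplus>\<^bsub>R\<^esub> i\<in>{..<n}. \<Oplus>\<^bsub>R\<^esub> j\<in>{..<n}. u i \<otimes>\<^bsub>R\<^esub> A i j \<otimes>\<^bsub>R\<^esub> v j)"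

definition is_subspace :: "nat ring \<Rightarrow> nat \<Rightarrow> (nat \<Rightarrow> nat) set \<Rightarrow> bool" where
  "is_subspace R n U \<longleftrightarrow> U \<subseteq> vecs R n \<and> vzero R \<in> U \<and>
     (\<forall>u\<in>U. \<forall>v\<in>U. vadd R u v \<in> U) \<and>
     (\<forall>c\<in>carrier R. \<forall>u\<in>U. vsmult R c u \<in> U)"

definition isotropic :: "nat ring \<Rightarrow> nat \<Rightarrow> (nat \<Rightarrow> nat \<Rightarrow> nat) \<Rightarrow> (nat \<Rightarrow> nat) set \<Rightarrow> bool" where
  "isotropic R n A U \<longleftrightarrow> is_subspace R n U \<and>
     (\<forall>u\<in>U. \<forall>v\<in>U. bilin R n A u v = \<zero>\<^bsub>R\<^esub>)"

end

theory Submission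
  imports Defs
begin


locale ffld = field R for R :: "nat ring" (structure) +
  assumes finR: "finite (carrier R)"

definition lc :: "nat ring \<Rightarrow> nat \<Rightarrow> (nat \<Rightarrow> nat) \<Rightarrow> (nat \<Rightarrow> nat \<Rightarrow> nat) \<Rightarrow> nat \<Rightarrow> nat" where
  "lc R m c z = (\<lambda>t. \<Oplus>\<^bsub>R\<^esub> j\<in>{..<m}. c j \<otimes>\<^bsub>R\<^esub> z j t)"

definition spn :: "nat ring \<Rightarrow> nat \<Rightarrow> (nat \<Rightarrow> nat \<Rightarrow> nat) \<Rightarrow> (nat \<Rightarrow> nat) set" where
  "spn R m z = {lc R m c z | c. c \<in> {..<m} \<rightarrow> carrier R}"

definition gi :: "nat ring \<Rightarrow> nat \<Rightarrow> nat \<Rightarrow> (nat \<Rightarrow> nat \<Rightarrow> nat) \<Rightarrow> bool" where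
  "gi R n m z \<longleftrightarrow> (\<forall>i<m. z i \<in> vecs R n \<and> z i \<notin> spn R i z)"

definition dot :: "nat ring \<Rightarrow> nat \<Rightarrow> (nat \<Rightarrow> nat) \<Rightarrow> (nat \<Rightarrow> nat) \<Rightarrow> nat" where
  "dot R n u v = (\<Oplus>\<^bsub>R\<^esub> t\<in>{..<n}. u t \<otimes>\<^bsub>R\<^esub> v t)"

context ffld begin
abbreviation "F \<equiv> carrier R"
abbreviation "q \<equiv> card (carrier R)"

lemma q_ge2: "q \<ge> 2"
proof -
  have s: "{\<zero>, \<one>} \<subseteq> F" by simp
  have "\<zero> \<noteq> \<one>" using zero_not_one by (metis)
  then have "card {\<zero>, \<one>} = 2" by (simp only: card_insert_if finite.intros insert_iff empty_iff card.empty) simp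
  then show ?thesis using card_mono[OF finR s] by simp
qed

lemma vec_carrier: "v \<in> vecs R n \<Longrightarrow> v t \<in> F"
  unfolding vecs_def by (cases "t < n") auto

lemma vec_high: "v \<in> vecs R n \<Longrightarrow> t \<ge> n \<Longrightarrow> v t = \<zero>"
  unfolding vecs_def by auto

lemma vec_eqI: assumes "u \<in> vecs R n" "v \<in> vecs R n" "\<And>t. t < n \<Longrightarrow> u t = v t" shows "u = v"
proof (rule ext)
  fix t
  show "u t = v t" using assms unfolding vecs_def by (cases "t < n") auto
qed

lemma vzero_vec[simp]: "vzero R \<in> vecs R n"
  unfolding vecs_def vzero_def by auto

lemma vadd_vec[simp]: "u \<in> vecs R n \<Longrightarrow> v \<in> vecs R n \<Longrightarrow> vadd R u v \<in> vecs R n"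
  unfolding vecs_def vadd_def by auto

lemma vsmult_vec[simp]: "c \<in> F \<Longrightarrow> u \<in> vecs R n \<Longrightarrow> vsmult R c u \<in> vecs R n"
  unfolding vecs_def vsmult_def by auto

lemma card_vecs: "card (vecs R n) = q ^ n" "finite (vecs R n)"
proof -
  have bij: "bij_betw (\<lambda>v. restrict v {..<n}) (vecs R n) (PiE {..<n} (\<lambda>_. F))"
  proof (rule bij_betw_byWitness[where f' = "\<lambda>f i. if i < n then f i else \<zero>"])
    show "\<forall>a\<in>vecs R n. (\<lambda>i. if i < n then restrict a {..<n} i else \<zero>) = a"
    proof
      fix a assume a: "a \<in> vecs R n"
      show "(\<lambda>i. if i < n then restrict a {..<n} i else \<zero>) = a"
      proof (rule ext)
        fix i
        show "(if i < n then restrict a {..<n} i else \<zero>) = a i"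
        proof (cases "i < n")
          case True then show ?thesis by simp
        next
          case False then show ?thesis using vec_high[OF a] by simp
        qed
      qed
    qed
    show "\<forall>a'\<in>PiE {..<n} (\<lambda>_. F). restrict (\<lambda>i. if i < n then a' i else \<zero>) {..<n} = a'"
    proof
      fix a' assume a': "a' \<in> PiE {..<n} (\<lambda>_. F)"
      show "restrict (\<lambda>i. if i < n then a' i else \<zero>) {..<n} = a'"
      proof (rule ext)
        fix i show "restrict (\<lambda>i. if i < n then a' i else \<zero>) {..<n} i = a' i"
        proof (cases "i < n")
          case True then show ?thesis unfolding restrict_def by simp
        next
          case False then show ?thesis using a' unfolding restrict_def PiE_def extensional_def by simp
        qed
      qed
    qed
    show "(\<lambda>v. restrict v {..<n}) ` vecs R n \<subseteq> PiE {..<n} (\<lambda>_. F)"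
    proof
      fix x assume "x \<in> (\<lambda>v. restrict v {..<n}) ` vecs R n"
      then obtain v where v: "v \<in> vecs R n" "x = restrict v {..<n}" by blast
      then show "x \<in> PiE {..<n} (\<lambda>_. F)" by (subst v(2), subst restrict_PiE_iff) (simp add: vec_carrier)
    qed
    show "(\<lambda>f i. if i < n then f i else \<zero>) ` PiE {..<n} (\<lambda>_. F) \<subseteq> vecs R n"
    proof
      fix x assume "x \<in> (\<lambda>f i. if i < n then f i else \<zero>) ` PiE {..<n} (\<lambda>_. F)"
      then obtain f where "f \<in> PiE {..<n} (\<lambda>_. F)" "x = (\<lambda>i. if i < n then f i else \<zero>)" by blast
      then show "x \<in> vecs R n" unfolding vecs_def by (auto simp: PiE_iff)
    qed
  qed
  have "card (PiE {..<n} (\<lambda>_. F)) = q ^ n" by (simp add: card_PiE)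
  then show "card (vecs R n) = q ^ n" using bij_betw_same_card[OF bij] by simp
  have "finite (PiE {..<n} (\<lambda>_. F))" using finR by (simp add: finite_PiE)
  then show "finite (vecs R n)" using bij_betw_finite[OF bij] by simp
qed

lemma inv_facts: assumes "x \<in> F" "x \<noteq> \<zero>"
  shows "inv x \<in> F" "inv x \<otimes> x = \<one>" "x \<otimes> inv x = \<one>"
proof -
  have u: "x \<in> Units R" using assms field_Units by blast
  show "inv x \<in> F" using u by simp
  show "inv x \<otimes> x = \<one>" using u by simp
  show "x \<otimes> inv x = \<one>" using u by simp
qed

lemma fl1: assumes c: "s \<in> F" "s' \<in> F" "a \<in> F" "a' \<in> F" "x \<in> F"
  and e: "s \<oplus> a \<otimes> x = s' \<oplus> a' \<otimes> x" and ne: "a \<noteq> a'"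
  shows "x = inv (a \<ominus> a') \<otimes> (s' \<oplus> \<ominus> \<one> \<otimes> s)"
proof -
  have dF: "a \<ominus> a' \<in> F" using c by simp
  have d0: "a \<ominus> a' \<noteq> \<zero>"
  proof
    assume "a \<ominus> a' = \<zero>"
    then have "a = a'" using c by (simp add: r_right_minus_eq)
    then show False using ne by simp
  qed
  have "(a \<ominus> a') \<otimes> x = (s \<oplus> a \<otimes> x) \<oplus> \<ominus> (s \<oplus> a' \<otimes> x)" using c by algebra
  also have "\<dots> = (s' \<oplus> a' \<otimes> x) \<oplus> \<ominus> (s \<oplus> a' \<otimes> x)" using e by simp
  also have "\<dots> = s' \<oplus> \<ominus> \<one> \<otimes> s" using c by algebra
  finally have h: "(a \<ominus> a') \<otimes> x = s' \<oplus> \<ominus> \<one> \<otimes> s" .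
  have "x = (inv (a \<ominus> a') \<otimes> (a \<ominus> a')) \<otimes> x" using inv_facts[OF dF d0] c by simp
  also have "\<dots> = inv (a \<ominus> a') \<otimes> ((a \<ominus> a') \<otimes> x)" using inv_facts[OF dF d0] c dF by (intro m_assoc) auto
  finally show ?thesis using h by simp
qed

lemma fl2: assumes c: "l \<in> F" "b \<in> F" "x \<in> F" and e: "l \<oplus> b \<otimes> x = \<zero>" and ne: "b \<noteq> \<zero>"
  shows "x = (\<ominus> (inv b)) \<otimes> l"
proof -
  have "b \<otimes> x = \<ominus> l" using c e by (metis a_comm m_closed minus_equality)
  have "x = (inv b \<otimes> b) \<otimes> x" using inv_facts[OF c(2) ne] c by simp
  also have "\<dots> = inv b \<otimes> (b \<otimes> x)" using inv_facts[OF c(2) ne] c by (intro m_assoc) auto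
  also have "\<dots> = inv b \<otimes> \<ominus> l" using \<open>b \<otimes> x = \<ominus> l\<close> by simp
  also have "\<dots> = (\<ominus> (inv b)) \<otimes> l" using inv_facts[OF c(2) ne] c by algebra
  finally show ?thesis .
qed

lemma fl3: assumes c: "x \<in> F" "y \<in> F" "w \<in> F" and e: "x \<oplus> w = y \<oplus> w" shows "x = y"
  using c e by (metis add.r_cancel)


lemma zc: assumes z: "\<forall>j<m. z j \<in> vecs R n" and j: "j < m" shows "z j t \<in> F"
  using vec_carrier z j by blast

lemma cz_Pi: assumes c: "c \<in> {..<m} \<rightarrow> F" and z: "\<forall>j<m. z j \<in> vecs R n"
  shows "(\<lambda>j. c j \<otimes> z j t) \<in> {..<m} \<rightarrow> F"
proof
  fix j assume "j \<in> {..<m}"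
  then have "c j \<in> F" "z j t \<in> F" using c zc[OF z] by auto
  then show "c j \<otimes> z j t \<in> F" by simp
qed

lemma lc_carrier: assumes c: "c \<in> {..<m} \<rightarrow> F" and z: "\<forall>j<m. z j \<in> vecs R n"
  shows "lc R m c z t \<in> F"
  unfolding lc_def using cz_Pi[OF c z] by (intro finsum_closed)

lemma lc_vec: assumes c: "c \<in> {..<m} \<rightarrow> F" and z: "\<forall>j<m. z j \<in> vecs R n"
  shows "lc R m c z \<in> vecs R n"
  unfolding vecs_def
proof (intro CollectI conjI allI impI)
  fix i assume "i < n" then show "lc R m c z i \<in> F" using lc_carrier[OF c z] by blast
next
  fix i assume i: "i \<ge> n"
  have "c j \<otimes> z j i = \<zero>" if j: "j \<in> {..<m}" for j
  proof -
    have "z j \<in> vecs R n" using z j by auto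
    then have "z j i = \<zero>" using vec_high i by blast
    moreover have "c j \<in> F" using c j by (auto simp: Pi_iff)
    ultimately show ?thesis by simp
  qed
  then show "lc R m c z i = \<zero>" unfolding lc_def by (intro add.finprod_one_eqI) auto
qed

lemma lc_Suc: assumes c: "c \<in> {..<Suc m} \<rightarrow> F" and z: "\<forall>j<Suc m. z j \<in> vecs R n"
  shows "lc R (Suc m) c z = vadd R (lc R m c z) (vsmult R (c m) (z m))"
proof (rule ext)
  fix t
  have cl: "(\<lambda>j. c j \<otimes> z j t) \<in> {..<m} \<rightarrow> F" using cz_Pi[OF c z, of t] unfolding Pi_def by auto
  have cm: "c m \<otimes> z m t \<in> F" using c zc[OF z, of m t] by (auto simp: Pi_iff)
  have "lc R (Suc m) c z t = c m \<otimes> z m t \<oplus> lc R m c z t"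
    unfolding lc_def lessThan_Suc using cl cm by (subst finsum_insert) auto
  also have "\<dots> = lc R m c z t \<oplus> c m \<otimes> z m t"
    using cm cl unfolding lc_def by (intro a_comm) (auto intro: finsum_closed)
  finally show "lc R (Suc m) c z t = vadd R (lc R m c z) (vsmult R (c m) (z m)) t"
    unfolding vadd_def vsmult_def by simp
qed

lemma lc_cong: assumes c: "c \<in> {..<m} \<rightarrow> F" and z: "\<forall>j<m. z j \<in> vecs R n"
  and e: "\<forall>j<m. c' j = c j" "\<forall>j<m. z' j = z j"
  shows "lc R m c' z' = lc R m c z"
proof (rule ext)
  fix t
  have cl: "(\<lambda>j. c j \<otimes> z j t) \<in> {..<m} \<rightarrow> F" using cz_Pi[OF c z] .
  show "lc R m c' z' t = lc R m c z t" unfolding lc_def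
    using cl e by (intro finsum_cong') auto
qed

lemma lc_zero: assumes z: "\<forall>j<m. z j \<in> vecs R n"
  shows "lc R m (\<lambda>_. \<zero>) z = vzero R"
proof (rule ext)
  fix t
  have "\<And>j. j \<in> {..<m} \<Longrightarrow> \<zero> \<otimes> z j t = \<zero>" using zc[OF z] by auto
  then show "lc R m (\<lambda>_. \<zero>) z t = vzero R t" unfolding lc_def vzero_def
    by (intro add.finprod_one_eqI) auto
qed

lemma lc_add: assumes c: "c \<in> {..<m} \<rightarrow> F" "d \<in> {..<m} \<rightarrow> F" and z: "\<forall>j<m. z j \<in> vecs R n"
  shows "vadd R (lc R m c z) (lc R m d z) = lc R m (\<lambda>j. c j \<oplus> d j) z"
proof (rule ext)
  fix t
  have cl: "(\<lambda>j. c j \<otimes> z j t) \<in> {..<m} \<rightarrow> F" "(\<lambda>j. d j \<otimes> z j t) \<in> {..<m} \<rightarrow> F"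
    using cz_Pi[OF c(1) z] cz_Pi[OF c(2) z] by auto
  have "vadd R (lc R m c z) (lc R m d z) t = (\<Oplus>j\<in>{..<m}. c j \<otimes> z j t \<oplus> d j \<otimes> z j t)"
    unfolding vadd_def lc_def using cl by (simp add: finsum_addf)
  also have "\<dots> = (\<Oplus>j\<in>{..<m}. (c j \<oplus> d j) \<otimes> z j t)"
    using c zc[OF z] by (intro finsum_cong') (auto simp: Pi_def l_distr)
  finally show "vadd R (lc R m c z) (lc R m d z) t = lc R m (\<lambda>j. c j \<oplus> d j) z t"
    unfolding lc_def by simp
qed

lemma lc_smult: assumes a: "a \<in> F" and c: "c \<in> {..<m} \<rightarrow> F" and z: "\<forall>j<m. z j \<in> vecs R n"
  shows "vsmult R a (lc R m c z) = lc R m (\<lambda>j. a \<otimes> c j) z"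
proof (rule ext)
  fix t
  have cl: "(\<lambda>j. c j \<otimes> z j t) \<in> {..<m} \<rightarrow> F" using cz_Pi[OF c z] .
  have "vsmult R a (lc R m c z) t = (\<Oplus>j\<in>{..<m}. a \<otimes> (c j \<otimes> z j t))"
    unfolding vsmult_def lc_def using cl a by (simp add: finsum_rdistr)
  also have "\<dots> = (\<Oplus>j\<in>{..<m}. (a \<otimes> c j) \<otimes> z j t)"
    using a c zc[OF z] by (intro finsum_cong') (auto simp: Pi_def m_assoc)
  finally show "vsmult R a (lc R m c z) t = lc R m (\<lambda>j. a \<otimes> c j) z t"
    unfolding lc_def by simp
qed

lemma spn_vecs: assumes z: "\<forall>j<m. z j \<in> vecs R n" shows "spn R m z \<subseteq> vecs R n"
  unfolding spn_def using lc_vec[OF _ z] by blast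

lemma spn_subspace: assumes z: "\<forall>j<m. z j \<in> vecs R n" shows "is_subspace R n (spn R m z)"
  unfolding is_subspace_def
proof (intro conjI ballI)
  show "spn R m z \<subseteq> vecs R n" by (rule spn_vecs[OF z])
  show "vzero R \<in> spn R m z" unfolding spn_def using lc_zero[OF z, symmetric] by fastforce
next
  fix u v assume "u \<in> spn R m z" "v \<in> spn R m z"
  then obtain c d where c: "c \<in> {..<m} \<rightarrow> F" "u = lc R m c z" and d: "d \<in> {..<m} \<rightarrow> F" "v = lc R m d z"
    unfolding spn_def by blast
  have "(\<lambda>j. c j \<oplus> d j) \<in> {..<m} \<rightarrow> F" using c d by auto
  then show "vadd R u v \<in> spn R m z" unfolding spn_def using lc_add[OF c(1) d(1) z] c d by auto
next
  fix a u assume a: "a \<in> F" and "u \<in> spn R m z"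
  then obtain c where c: "c \<in> {..<m} \<rightarrow> F" "u = lc R m c z" unfolding spn_def by blast
  have "(\<lambda>j. a \<otimes> c j) \<in> {..<m} \<rightarrow> F" using c a by auto
  then show "vsmult R a u \<in> spn R m z" unfolding spn_def using lc_smult[OF a c(1) z] c by auto
qed

lemma spn_sub: assumes X: "is_subspace R n X" and z: "\<forall>j<m. z j \<in> X"
  shows "spn R m z \<subseteq> X"
  using z
proof (induction m)
  case 0
  have "lc R 0 c z = vzero R" for c unfolding lc_def vzero_def by simp
  then show ?case unfolding spn_def using X unfolding is_subspace_def by auto
next
  case (Suc m)
  have zv: "\<forall>j<Suc m. z j \<in> vecs R n" using Suc.prems X unfolding is_subspace_def by blast
  have IH: "spn R m z \<subseteq> X" using Suc by auto
  show ?case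
  proof
    fix u assume "u \<in> spn R (Suc m) z"
    then obtain c where c: "c \<in> {..<Suc m} \<rightarrow> F" "u = lc R (Suc m) c z" unfolding spn_def by blast
    have c': "c \<in> {..<m} \<rightarrow> F" using c by auto
    have "lc R m c z \<in> X" using IH c' unfolding spn_def by blast
    moreover have "vsmult R (c m) (z m) \<in> X"
    proof -
      have "c m \<in> F" "z m \<in> X" using Suc.prems c by auto
      then show ?thesis using X unfolding is_subspace_def by blast
    qed
    ultimately have "vadd R (lc R m c z) (vsmult R (c m) (z m)) \<in> X" using X unfolding is_subspace_def by auto
    then show "u \<in> X" using lc_Suc[OF c(1) zv] c(2) by simp
  qed
qed

lemma in_spn: assumes i: "i < m" and z: "\<forall>j<m. z j \<in> vecs R n"
  shows "z i \<in> spn R m z"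
proof -
  let ?c = "\<lambda>j. if j = i then \<one> else \<zero>"
  have c: "?c \<in> {..<m} \<rightarrow> F" by auto
  have "lc R m ?c z = z i"
  proof (rule ext)
    fix t
    have "lc R m ?c z t = (\<Oplus>j\<in>{..<m}. if i = j then z j t else \<zero>)"
      unfolding lc_def using zc[OF z] by (intro finsum_cong') (auto simp: Pi_def)
    also have "\<dots> = z i t" using i zc[OF z] by (intro finsum_singleton) (auto simp: Pi_def)
    finally show "lc R m ?c z t = z i t" .
  qed
  then show ?thesis unfolding spn_def using c by (intro CollectI exI[where x="?c"]) simp
qed

lemma spn_cong: assumes z: "\<forall>j<m. z j \<in> vecs R n" and e: "\<forall>j<m. z' j = z j"
  shows "spn R m z' = spn R m z"
  unfolding spn_def using lc_cong[OF _ z _ e] by (metis (no_types, lifting))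

lemma spn_Suc: assumes z: "\<forall>j<Suc m. z j \<in> vecs R n"
  shows "spn R (Suc m) z = (\<lambda>(s, a). vadd R s (vsmult R a (z m))) ` (spn R m z \<times> F)"
proof
  show "spn R (Suc m) z \<subseteq> (\<lambda>(s, a). vadd R s (vsmult R a (z m))) ` (spn R m z \<times> F)"
  proof
    fix u assume "u \<in> spn R (Suc m) z"
    then obtain c where c: "c \<in> {..<Suc m} \<rightarrow> F" "u = lc R (Suc m) c z" unfolding spn_def by blast
    have c': "c \<in> {..<m} \<rightarrow> F" using c by auto
    have "lc R m c z \<in> spn R m z" unfolding spn_def using c' by (intro CollectI exI[where x=c]) simp
    moreover have "c m \<in> F" using c by auto
    ultimately show "u \<in> (\<lambda>(s, a). vadd R s (vsmult R a (z m))) ` (spn R m z \<times> F)"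
      using lc_Suc[OF c(1) z] c(2) by (auto intro!: image_eqI[where x = "(lc R m c z, c m)"])
  qed
next
  show "(\<lambda>(s, a). vadd R s (vsmult R a (z m))) ` (spn R m z \<times> F) \<subseteq> spn R (Suc m) z"
  proof
    fix u assume "u \<in> (\<lambda>(s, a). vadd R s (vsmult R a (z m))) ` (spn R m z \<times> F)"
    then obtain s a where sa: "s \<in> spn R m z" "a \<in> F" "u = vadd R s (vsmult R a (z m))" by auto
    then obtain c where c: "c \<in> {..<m} \<rightarrow> F" "s = lc R m c z" unfolding spn_def by blast
    let ?c = "c(m := a)"
    have c': "?c \<in> {..<Suc m} \<rightarrow> F"
    proof
      fix j assume j: "j \<in> {..<Suc m}"
      show "?c j \<in> F"
      proof (cases "j = m")
        case True then show ?thesis using sa by simp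
      next
        case False then have "j < m" using j by simp
        then show ?thesis using c False by (simp add: Pi_iff)
      qed
    qed
    have zm: "\<forall>j<m. z j \<in> vecs R n" using z by auto
    have "lc R m ?c z = lc R m c z" by (rule lc_cong[OF c(1) zm]) auto
    then have "lc R (Suc m) ?c z = u" using lc_Suc[OF c' z] sa c by simp
    then show "u \<in> spn R (Suc m) z" unfolding spn_def using c' by blast
  qed
qed

end


context ffld begin

lemma gi_mono: "gi R n (Suc m) z \<Longrightarrow> gi R n m z"
  unfolding gi_def by auto

lemma gi_mono': "gi R n m z \<Longrightarrow> k \<le> m \<Longrightarrow> gi R n k z"
  unfolding gi_def by auto

lemma gi_vecs: "gi R n m z \<Longrightarrow> \<forall>j<m. z j \<in> vecs R n"
  unfolding gi_def by auto

lemma spn_inj: assumes zm: "\<forall>j<Suc m. z j \<in> vecs R n" and nz: "z m \<notin> spn R m z"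
  shows "inj_on (\<lambda>(s,a). vadd R s (vsmult R a (z m))) (spn R m z \<times> F)"
proof (rule inj_onI)
  fix p p' assume p: "p \<in> spn R m z \<times> F" and p': "p' \<in> spn R m z \<times> F"
    and e: "(\<lambda>(s,a). vadd R s (vsmult R a (z m))) p = (\<lambda>(s,a). vadd R s (vsmult R a (z m))) p'"
  obtain s a where sa: "p = (s, a)" by (cases p)
  obtain s' a' where sa': "p' = (s', a')" by (cases p')
  have zmm: "\<forall>j<m. z j \<in> vecs R n" using zm by auto
  have S: "is_subspace R n (spn R m z)" by (rule spn_subspace[OF zmm])
  have s: "s \<in> spn R m z" "a \<in> F" using p sa by auto
  have s': "s' \<in> spn R m z" "a' \<in> F" using p' sa' by auto
  have sv: "s \<in> vecs R n" "s' \<in> vecs R n" using s s' S unfolding is_subspace_def by auto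
  have zmv: "z m \<in> vecs R n" using zm by auto
  have et: "s t \<oplus> a \<otimes> z m t = s' t \<oplus> a' \<otimes> z m t" for t
    using fun_cong[OF e[unfolded sa sa'], of t] unfolding vadd_def vsmult_def by simp
  have aa: "a = a'"
  proof (rule ccontr)
    assume ne: "a \<noteq> a'"
    have dF: "a \<ominus> a' \<in> F" using s s' by simp
    let ?w = "vsmult R (inv (a \<ominus> a')) (vadd R s' (vsmult R (\<ominus> \<one>) s))"
    have d0: "a \<ominus> a' \<noteq> \<zero>"
    proof
      assume "a \<ominus> a' = \<zero>"
      then have "a = a'" using s s' by (simp add: r_right_minus_eq)
      then show False using ne by simp
    qed
    have iF: "inv (a \<ominus> a') \<in> F" using inv_facts[OF dF d0] by simp
    have "vsmult R (\<ominus> \<one>) s \<in> spn R m z" using S s unfolding is_subspace_def by simp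
    then have "vadd R s' (vsmult R (\<ominus> \<one>) s) \<in> spn R m z" using S s' unfolding is_subspace_def by simp
    then have wS: "?w \<in> spn R m z" using S iF unfolding is_subspace_def by simp
    have "?w = z m"
    proof (rule vec_eqI[where n=n])
      show "?w \<in> vecs R n" using wS S unfolding is_subspace_def by auto
      show "z m \<in> vecs R n" by (rule zmv)
      fix t
      have "z m t = inv (a \<ominus> a') \<otimes> (s' t \<oplus> \<ominus> \<one> \<otimes> s t)"
        using fl1[OF vec_carrier[OF sv(1)] vec_carrier[OF sv(2)] s(2) s'(2) vec_carrier[OF zmv] et ne] .
      then show "?w t = z m t" unfolding vsmult_def vadd_def by simp
    qed
    then show False using wS nz by simp
  qed
  have "s = s'"
  proof (rule vec_eqI[OF sv])
    fix t show "s t = s' t"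
      using fl3[OF vec_carrier[OF sv(1)] vec_carrier[OF sv(2)], of "a \<otimes> z m t"] et[of t] aa s(2) vec_carrier[OF zmv]
      by simp
  qed
  then show "p = p'" using sa sa' aa by simp
qed

lemma spn_0: "spn R 0 z = {vzero R}"
proof -
  have "lc R 0 c z = vzero R" for c unfolding lc_def vzero_def by simp
  then show ?thesis unfolding spn_def by auto
qed

lemma card_spn: assumes "gi R n m z" shows "card (spn R m z) = q ^ m"
  using assms
proof (induction m)
  case 0 then show ?case by (simp add: spn_0)
next
  case (Suc m)
  have zm: "\<forall>j<Suc m. z j \<in> vecs R n" using gi_vecs[OF Suc.prems] .
  have nz: "z m \<notin> spn R m z" using Suc.prems unfolding gi_def by auto
  have IH: "card (spn R m z) = q ^ m" using Suc.IH gi_mono[OF Suc.prems] by simp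
  have "card (spn R (Suc m) z) = card (spn R m z \<times> F)"
    unfolding spn_Suc[OF zm] by (rule card_image[OF spn_inj[OF zm nz]])
  also have "\<dots> = q ^ m * q" using IH by (simp add: card_cartesian_product)
  finally show ?case by simp
qed

lemma finite_spn: assumes "\<forall>j<m. z j \<in> vecs R n" shows "finite (spn R m z)"
  using spn_vecs[OF assms] card_vecs(2) finite_subset by blast

lemma gi_indep: assumes "gi R n m z" "c \<in> {..<m} \<rightarrow> F" "lc R m c z = vzero R"
  shows "\<forall>j<m. c j = \<zero>"
  using assms
proof (induction m arbitrary: c)
  case 0 then show ?case by simp
next
  case (Suc m)
  have zm: "\<forall>j<Suc m. z j \<in> vecs R n" using gi_vecs[OF Suc.prems(1)] .
  have zmm: "\<forall>j<m. z j \<in> vecs R n" using zm by auto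
  have nz: "z m \<notin> spn R m z" using Suc.prems(1) unfolding gi_def by auto
  have c': "c \<in> {..<m} \<rightarrow> F" using Suc.prems(2) by auto
  have cm: "c m \<in> F" using Suc.prems(2) by auto
  have zmv: "z m \<in> vecs R n" using zm by auto
  have lv: "lc R m c z \<in> vecs R n" by (rule lc_vec[OF c' zmm])
  have e: "lc R m c z t \<oplus> c m \<otimes> z m t = \<zero>" for t
    using fun_cong[OF Suc.prems(3)[unfolded lc_Suc[OF Suc.prems(2) zm]], of t]
    unfolding vadd_def vsmult_def vzero_def by simp
  have cm0: "c m = \<zero>"
  proof (rule ccontr)
    assume ne: "c m \<noteq> \<zero>"
    have iF: "inv (c m) \<in> F" using inv_facts[OF cm ne] by simp
    have S: "is_subspace R n (spn R m z)" by (rule spn_subspace[OF zmm])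
    have ls: "lc R m c z \<in> spn R m z" unfolding spn_def using c' by (intro CollectI exI[where x=c]) simp
    then have wS: "vsmult R (\<ominus> (inv (c m))) (lc R m c z) \<in> spn R m z"
      using S iF unfolding is_subspace_def by simp
    have "vsmult R (\<ominus> (inv (c m))) (lc R m c z) = z m"
    proof (rule vec_eqI[where n=n])
      show "vsmult R (\<ominus> (inv (c m))) (lc R m c z) \<in> vecs R n" using lv iF by simp
      show "z m \<in> vecs R n" by (rule zmv)
      fix t
      show "vsmult R (\<ominus> (inv (c m))) (lc R m c z) t = z m t"
        using fl2[OF vec_carrier[OF lv] cm vec_carrier[OF zmv] e ne] unfolding vsmult_def by simp
    qed
    then show False using wS nz by simp
  qed
  have "lc R m c z = vzero R"
  proof (rule vec_eqI[OF lv vzero_vec])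
    fix t show "lc R m c z t = vzero R t"
      using e[of t] cm0 vec_carrier[OF lv] vec_carrier[OF zmv] unfolding vzero_def by simp
  qed
  then have "\<forall>j<m. c j = \<zero>" using Suc.IH[OF gi_mono[OF Suc.prems(1)] c'] by simp
  then show ?case using cm0 less_Suc_eq by auto
qed

end


context ffld begin

lemma gi_bound: assumes "gi R n m z" shows "m \<le> n"
proof -
  have zm: "\<forall>j<m. z j \<in> vecs R n" using gi_vecs[OF assms] .
  have "q ^ m \<le> q ^ n"
    using card_spn[OF assms] card_mono[OF card_vecs(2) spn_vecs[OF zm]] card_vecs(1) by simp
  then show ?thesis using q_ge2 by (simp add: power_le_imp_le_exp)
qed

lemma subspace_basis: assumes X: "is_subspace R n X"
  shows "\<exists>m z. gi R n m z \<and> (\<forall>j<m. z j \<in> X) \<and> spn R m z = X"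
proof -
  define M where "M = {m. \<exists>z. gi R n m z \<and> (\<forall>j<m. z j \<in> X)}"
  have Mb: "M \<subseteq> {..n}" unfolding M_def using gi_bound by auto
  then have fM: "finite M" using finite_subset by blast
  have "0 \<in> M" unfolding M_def gi_def by auto
  then have "M \<noteq> {}" by blast
  define m where "m = Max M"
  have "m \<in> M" unfolding m_def using fM \<open>M \<noteq> {}\<close> by (rule Max_in)
  then obtain z where z: "gi R n m z" "\<forall>j<m. z j \<in> X" unfolding M_def by blast
  have zv: "\<forall>j<m. z j \<in> vecs R n" using gi_vecs[OF z(1)] .
  have sub: "spn R m z \<subseteq> X" by (rule spn_sub[OF X z(2)])
  have "spn R m z = X"
  proof (rule ccontr)
    assume "spn R m z \<noteq> X"
    then obtain x where x: "x \<in> X" "x \<notin> spn R m z" using sub by blast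
    have xv: "x \<in> vecs R n" using x X unfolding is_subspace_def by auto
    define z' where "z' = z(m := x)"
    have eq: "\<forall>j<i. z' j = z j" if "i \<le> m" for i using that unfolding z'_def by auto
    have sc: "spn R i z' = spn R i z" if "i \<le> m" for i
      by (rule spn_cong[where n=n]) (use zv eq that in auto)
    have "gi R n (Suc m) z'"
      unfolding gi_def
    proof (intro allI impI)
      fix i assume i: "i < Suc m"
      show "z' i \<in> vecs R n \<and> z' i \<notin> spn R i z'"
      proof (cases "i = m")
        case True then show ?thesis using sc[of m] xv x unfolding z'_def by simp
      next
        case False then have "i < m" using i by simp
        then show ?thesis using sc[of i] z(1) unfolding gi_def z'_def by simp
      qed
    qed
    moreover have "\<forall>j<Suc m. z' j \<in> X" using z(2) x unfolding z'_def by (auto simp: less_Suc_eq)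
    ultimately have "Suc m \<in> M" unfolding M_def by blast
    then have "Suc m \<le> m" unfolding m_def using fM by (simp add: Max_ge)
    then show False by simp
  qed
  then show ?thesis using z by blast
qed

lemma subspace_card: assumes X: "is_subspace R n X"
  shows "\<exists>m\<le>n. card X = q ^ m" "finite X"
proof -
  obtain m z where z: "gi R n m z" "\<forall>j<m. z j \<in> X" "spn R m z = X"
    using subspace_basis[OF X] by blast
  show "\<exists>m\<le>n. card X = q ^ m" using card_spn[OF z(1)] z(3) gi_bound[OF z(1)] by blast
  show "finite X" using X card_vecs(2) finite_subset unfolding is_subspace_def by blast
qed

lemma ker_subspace: assumes X: "is_subspace R m X"
  and fa: "\<forall>x\<in>X. \<forall>y\<in>X. f (vadd R x y) = f x \<oplus> f y"
  and fs: "\<forall>a\<in>F. \<forall>x\<in>X. f (vsmult R a x) = a \<otimes> f x"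
  and fc: "\<forall>x\<in>X. f x \<in> F"
  shows "is_subspace R m {x\<in>X. f x = \<zero>}"
proof -
  have "f (vzero R) = \<zero>"
  proof -
    have "vsmult R \<zero> (vzero R) = vzero R" unfolding vsmult_def vzero_def by simp
    then have "f (vzero R) = \<zero> \<otimes> f (vzero R)" using fs X unfolding is_subspace_def
      by (metis zero_closed)
    then show ?thesis using fc X unfolding is_subspace_def by simp
  qed
  then show ?thesis using X fa fs fc unfolding is_subspace_def by auto
qed

lemma kernel_card: assumes X: "is_subspace R m X"
  and fa: "\<forall>x\<in>X. \<forall>y\<in>X. f (vadd R x y) = f x \<oplus> f y"
  and fs: "\<forall>a\<in>F. \<forall>x\<in>X. f (vsmult R a x) = a \<otimes> f x"
  and fc: "\<forall>x\<in>X. f x \<in> F"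
  shows "card X \<le> q * card {x\<in>X. f x = \<zero>}"
proof (cases "\<forall>x\<in>X. f x = \<zero>")
  case True
  then have "{x\<in>X. f x = \<zero>} = X" by auto
  then show ?thesis using q_ge2 by simp
next
  case False
  then obtain x0 where x0: "x0 \<in> X" "f x0 \<noteq> \<zero>" by blast
  have f0: "f x0 \<in> F" using fc x0 by auto
  have iF: "inv (f x0) \<in> F" using inv_facts[OF f0 x0(2)] by simp
  define x1 where "x1 = vsmult R (inv (f x0)) x0"
  have x1X: "x1 \<in> X" using X x0 iF unfolding x1_def is_subspace_def by auto
  have fx1: "f x1 = \<one>" unfolding x1_def using fs iF x0 inv_facts[OF f0 x0(2)] by simp
  have XV: "X \<subseteq> vecs R m" using X unfolding is_subspace_def by auto
  define g where "g = (\<lambda>x. (f x, vadd R x (vsmult R (\<ominus> f x) x1)))"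
  have fin: "finite (F \<times> {x\<in>X. f x = \<zero>})"
    using finR subspace_card(2)[OF X] by simp
  have "inj_on g X"
  proof (rule inj_onI)
    fix x y assume x: "x \<in> X" and y: "y \<in> X" and e: "g x = g y"
    have fxy: "f x = f y" using e unfolding g_def by simp
    have e2: "vadd R x (vsmult R (\<ominus> f x) x1) = vadd R y (vsmult R (\<ominus> f x) x1)"
      using e fxy unfolding g_def by simp
    have xv: "x \<in> vecs R m" "y \<in> vecs R m" "x1 \<in> vecs R m" using x y x1X XV by auto
    have fxF: "\<ominus> f x \<in> F" using fc x by simp
    show "x = y"
    proof (rule vec_eqI[OF xv(1,2)])
      fix t
      show "x t = y t"
        using fl3[OF vec_carrier[OF xv(1)] vec_carrier[OF xv(2)], of "\<ominus> f x \<otimes> x1 t"]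
          fun_cong[OF e2, of t] fxF vec_carrier[OF xv(3)]
        unfolding vadd_def vsmult_def by simp
    qed
  qed
  moreover have "g ` X \<subseteq> F \<times> {x\<in>X. f x = \<zero>}"
  proof
    fix u assume "u \<in> g ` X"
    then obtain x where x: "x \<in> X" "u = g x" by blast
    have fxF: "f x \<in> F" "\<ominus> f x \<in> F" using fc x by auto
    have m1: "vsmult R (\<ominus> f x) x1 \<in> X" using X x1X fxF unfolding is_subspace_def by auto
    have "f (vadd R x (vsmult R (\<ominus> f x) x1)) = f x \<oplus> (\<ominus> f x) \<otimes> \<one>"
      using fa fs x m1 x1X fxF fx1 by simp
    also have "\<dots> = \<zero>" using fxF by (simp add: r_neg)
    finally show "u \<in> F \<times> {x\<in>X. f x = \<zero>}"
      using x fxF m1 X unfolding g_def is_subspace_def by auto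
  qed
  ultimately have "card X \<le> card (F \<times> {x\<in>X. f x = \<zero>})"
    using fin by (rule card_inj_on_le)
  then show ?thesis by (simp add: card_cartesian_product)
qed

end


context ffld begin

lemma finsum_swap: assumes A: "finite A" and B: "finite B" and f: "\<forall>i\<in>A. \<forall>j\<in>B. f i j \<in> F"
  shows "(\<Oplus>i\<in>A. \<Oplus>j\<in>B. f i j) = (\<Oplus>j\<in>B. \<Oplus>i\<in>A. f i j)"
  using A f
proof (induction A rule: finite_induct)
  case empty then show ?case by (simp add: add.finprod_one_eqI)
next
  case (insert x A)
  have fx: "(\<lambda>j. f x j) \<in> B \<rightarrow> F" using insert.prems by auto
  have fA: "\<And>j. j \<in> B \<Longrightarrow> (\<lambda>i. f i j) \<in> A \<rightarrow> F" using insert.prems by auto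
  have c1: "(\<lambda>i. \<Oplus>j\<in>B. f i j) \<in> A \<rightarrow> F" using insert.prems by (auto intro!: finsum_closed)
  have c2: "(\<lambda>j. \<Oplus>i\<in>A. f i j) \<in> B \<rightarrow> F" using insert.prems by (auto intro!: finsum_closed)
  have "(\<Oplus>i\<in>insert x A. \<Oplus>j\<in>B. f i j) = (\<Oplus>j\<in>B. f x j) \<oplus> (\<Oplus>i\<in>A. \<Oplus>j\<in>B. f i j)"
    using insert.hyps c1 fx by (subst finsum_insert) (auto intro!: finsum_closed)
  also have "\<dots> = (\<Oplus>j\<in>B. f x j) \<oplus> (\<Oplus>j\<in>B. \<Oplus>i\<in>A. f i j)"
    using insert.IH insert.prems by simp
  also have "\<dots> = (\<Oplus>j\<in>B. f x j \<oplus> (\<Oplus>i\<in>A. f i j))"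
    using fx c2 by (simp add: finsum_addf)
  also have "\<dots> = (\<Oplus>j\<in>B. \<Oplus>i\<in>insert x A. f i j)"
  proof (rule finsum_cong')
    show "(\<lambda>j. \<Oplus>i\<in>insert x A. f i j) \<in> B \<rightarrow> F" using insert.prems by (auto intro!: finsum_closed)
    fix j assume j: "j \<in> B"
    then show "f x j \<oplus> (\<Oplus>i\<in>A. f i j) = (\<Oplus>i\<in>insert x A. f i j)"
      using insert.hyps fA[OF j] fx by (subst finsum_insert) auto
  qed simp
  finally show ?case .
qed

lemma dot_carrier: assumes "u \<in> vecs R n" "v \<in> vecs R n" shows "dot R n u v \<in> F"
  unfolding dot_def using vec_carrier[OF assms(1)] vec_carrier[OF assms(2)] by (auto intro!: finsum_closed)

lemma dot_add_r: assumes u: "u \<in> vecs R n" and v: "v \<in> vecs R n" and w: "w \<in> vecs R n"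
  shows "dot R n u (vadd R v w) = dot R n u v \<oplus> dot R n u w"
proof -
  have "dot R n u (vadd R v w) = (\<Oplus>t\<in>{..<n}. u t \<otimes> v t \<oplus> u t \<otimes> w t)"
    unfolding dot_def vadd_def using vec_carrier[OF u] vec_carrier[OF v] vec_carrier[OF w]
    by (intro finsum_cong') (auto simp: r_distr)
  also have "\<dots> = dot R n u v \<oplus> dot R n u w"
    unfolding dot_def using vec_carrier[OF u] vec_carrier[OF v] vec_carrier[OF w]
    by (intro finsum_addf) auto
  finally show ?thesis .
qed

lemma dot_add_l: assumes u: "u \<in> vecs R n" and v: "v \<in> vecs R n" and w: "w \<in> vecs R n"
  shows "dot R n (vadd R v w) u = dot R n v u \<oplus> dot R n w u"
proof -
  have "dot R n (vadd R v w) u = (\<Oplus>t\<in>{..<n}. v t \<otimes> u t \<oplus> w t \<otimes> u t)"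
    unfolding dot_def vadd_def using vec_carrier[OF u] vec_carrier[OF v] vec_carrier[OF w]
    by (intro finsum_cong') (auto simp: l_distr)
  also have "\<dots> = dot R n v u \<oplus> dot R n w u"
    unfolding dot_def using vec_carrier[OF u] vec_carrier[OF v] vec_carrier[OF w]
    by (intro finsum_addf) auto
  finally show ?thesis .
qed

lemma dot_smult_r: assumes u: "u \<in> vecs R n" and v: "v \<in> vecs R n" and a: "a \<in> F"
  shows "dot R n u (vsmult R a v) = a \<otimes> dot R n u v"
proof -
  have "dot R n u (vsmult R a v) = (\<Oplus>t\<in>{..<n}. a \<otimes> (u t \<otimes> v t))"
    unfolding dot_def vsmult_def using vec_carrier[OF u] vec_carrier[OF v] a
    by (intro finsum_cong') (auto simp: m_lcomm)
  also have "\<dots> = a \<otimes> dot R n u v"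
    unfolding dot_def using vec_carrier[OF u] vec_carrier[OF v] a
    by (subst finsum_rdistr) auto
  finally show ?thesis .
qed

lemma dot_smult_l: assumes u: "u \<in> vecs R n" and v: "v \<in> vecs R n" and a: "a \<in> F"
  shows "dot R n (vsmult R a v) u = a \<otimes> dot R n v u"
proof -
  have "dot R n (vsmult R a v) u = (\<Oplus>t\<in>{..<n}. a \<otimes> (v t \<otimes> u t))"
    unfolding dot_def vsmult_def using vec_carrier[OF u] vec_carrier[OF v] a
    by (intro finsum_cong') (auto simp: m_assoc)
  also have "\<dots> = a \<otimes> dot R n v u"
    unfolding dot_def using vec_carrier[OF u] vec_carrier[OF v] a
    by (subst finsum_rdistr) auto
  finally show ?thesis .
qed

lemma dot_zero_r: assumes u: "u \<in> vecs R n" shows "dot R n u (vzero R) = \<zero>"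
  unfolding dot_def vzero_def using vec_carrier[OF u] by (intro add.finprod_one_eqI) simp

definition uvec :: "nat \<Rightarrow> nat \<Rightarrow> nat" where "uvec t = (\<lambda>i. if i = t then \<one> else \<zero>)"

lemma uvec_vec: "t < n \<Longrightarrow> uvec t \<in> vecs R n"
  unfolding uvec_def vecs_def by auto

lemma dot_uvec: assumes w: "w \<in> vecs R n" and t: "t < n" shows "dot R n w (uvec t) = w t"
proof -
  have "dot R n w (uvec t) = (\<Oplus>i\<in>{..<n}. if t = i then w i else \<zero>)"
    unfolding dot_def uvec_def using vec_carrier[OF w] by (intro finsum_cong') auto
  also have "\<dots> = w t" using t vec_carrier[OF w] by (intro finsum_singleton) auto
  finally show ?thesis .
qed

lemma dot_lc_swap: assumes z: "\<forall>j<m. z j \<in> vecs R n" and c: "c \<in> vecs R m" and v: "v \<in> vecs R n"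
  shows "dot R m c (\<lambda>j. if j < m then dot R n (z j) v else \<zero>) = dot R n (lc R m c z) v"
proof -
  have zc': "\<And>j t. j < m \<Longrightarrow> z j t \<in> F" using z vec_carrier by blast
  have "dot R m c (\<lambda>j. if j < m then dot R n (z j) v else \<zero>) = (\<Oplus>j\<in>{..<m}. \<Oplus>t\<in>{..<n}. c j \<otimes> (z j t \<otimes> v t))"
    unfolding dot_def
  proof (rule finsum_cong')
    show "(\<lambda>j. \<Oplus>t\<in>{..<n}. c j \<otimes> (z j t \<otimes> v t)) \<in> {..<m} \<rightarrow> F"
      using zc' vec_carrier[OF c] vec_carrier[OF v] by (auto intro!: finsum_closed)
    fix j assume j: "j \<in> {..<m}"
    then have jm: "j < m" by simp
    have "c j \<otimes> (\<Oplus>t\<in>{..<n}. z j t \<otimes> v t) = (\<Oplus>t\<in>{..<n}. c j \<otimes> (z j t \<otimes> v t))"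
      using zc'[OF jm] vec_carrier[OF c] vec_carrier[OF v] by (intro finsum_rdistr) auto
    then show "c j \<otimes> (if j < m then \<Oplus>t\<in>{..<n}. z j t \<otimes> v t else \<zero>) = (\<Oplus>t\<in>{..<n}. c j \<otimes> (z j t \<otimes> v t))"
      using jm by simp
  qed simp
  also have "\<dots> = (\<Oplus>t\<in>{..<n}. \<Oplus>j\<in>{..<m}. c j \<otimes> (z j t \<otimes> v t))"
    using zc' vec_carrier[OF c] vec_carrier[OF v] by (intro finsum_swap) auto
  also have "\<dots> = dot R n (lc R m c z) v"
    unfolding dot_def lc_def
  proof (rule finsum_cong')
    show "(\<lambda>t. (\<Oplus>j\<in>{..<m}. c j \<otimes> z j t) \<otimes> v t) \<in> {..<n} \<rightarrow> F"
      using zc' vec_carrier[OF c] vec_carrier[OF v] by (auto intro!: finsum_closed)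
    fix t assume t: "t \<in> {..<n}"
    have "(\<Oplus>j\<in>{..<m}. c j \<otimes> (z j t \<otimes> v t)) = (\<Oplus>j\<in>{..<m}. c j \<otimes> z j t \<otimes> v t)"
      using zc' vec_carrier[OF c] vec_carrier[OF v] by (intro finsum_cong') (auto simp: m_assoc)
    also have "\<dots> = (\<Oplus>j\<in>{..<m}. c j \<otimes> z j t) \<otimes> v t"
      using zc' vec_carrier[OF c] vec_carrier[OF v] by (subst finsum_ldistr) auto
    finally show "(\<Oplus>j\<in>{..<m}. c j \<otimes> (z j t \<otimes> v t)) = (\<Oplus>j\<in>{..<m}. c j \<otimes> z j t) \<otimes> v t" .
  qed simp
  finally show ?thesis .
qed

end


context ffld begin

lemma vadd_zero_r: "y \<in> vecs R m \<Longrightarrow> vadd R y (vzero R) = y"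
  by (rule vec_eqI[where n=m]) (auto simp: vadd_def vzero_def vec_carrier)

lemma vec_nonzero: assumes X: "is_subspace R m X" and c: "card X \<ge> 2"
  shows "\<exists>x\<in>X. x \<noteq> vzero R"
proof (rule ccontr)
  assume "\<not> ?thesis"
  then have "X \<subseteq> {vzero R}" by auto
  then have "card X \<le> card {vzero R}" by (intro card_mono) auto
  then have "card X \<le> 1" by simp
  then show False using c by simp
qed

lemma pivot: assumes g: "gi R n m z"
  shows "card {v \<in> vecs R n. \<forall>j<m. dot R n (z j) v = \<zero>} * q ^ m \<le> q ^ n"
proof -
  have zv: "\<forall>j<m. z j \<in> vecs R n" using gi_vecs[OF g] .
  define phi where "phi = (\<lambda>v j. if j < m then dot R n (z j) v else \<zero>)"
  have phiv: "phi v \<in> vecs R m" if "v \<in> vecs R n" for v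
    unfolding vecs_def phi_def using dot_carrier zv that by auto
  have phi_add: "phi (vadd R u v) = vadd R (phi u) (phi v)" if "u \<in> vecs R n" "v \<in> vecs R n" for u v
  proof (rule ext)
    fix j show "phi (vadd R u v) j = vadd R (phi u) (phi v) j"
      unfolding phi_def vadd_def using dot_add_r[of "z j" n u v, folded vadd_def] zv that
      by (cases "j < m") (auto simp: vadd_def)
  qed
  have phi_smult: "phi (vsmult R a v) = vsmult R a (phi v)" if "a \<in> F" "v \<in> vecs R n" for a v
  proof (rule ext)
    fix j show "phi (vsmult R a v) j = vsmult R a (phi v) j"
      unfolding phi_def vsmult_def using dot_smult_r[of "z j" n v a, folded vsmult_def] zv that
      by (cases "j < m") (auto simp: vsmult_def)
  qed
  have phi0: "phi (vzero R) = vzero R"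
    unfolding phi_def vzero_def using dot_zero_r[of _ n, unfolded vzero_def] zv by auto
  define Y where "Y = phi ` vecs R n"
  have YS: "is_subspace R m Y"
    unfolding is_subspace_def Y_def
  proof (intro conjI ballI)
    show "phi ` vecs R n \<subseteq> vecs R m" using phiv by auto
    show "vzero R \<in> phi ` vecs R n" using phi0 vzero_vec by (metis image_eqI)
  next
    fix u v assume "u \<in> phi ` vecs R n" "v \<in> phi ` vecs R n"
    then obtain u' v' where "u' \<in> vecs R n" "v' \<in> vecs R n" "u = phi u'" "v = phi v'" by blast
    then show "vadd R u v \<in> phi ` vecs R n" using phi_add by (metis image_eqI vadd_vec)
  next
    fix a u assume "a \<in> F" "u \<in> phi ` vecs R n"
    then obtain u' where "u' \<in> vecs R n" "u = phi u'" by blast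
    then show "vsmult R a u \<in> phi ` vecs R n" using phi_smult \<open>a \<in> F\<close> by (metis image_eqI vsmult_vec)
  qed
  have Yfull: "Y = vecs R m"
  proof (rule ccontr)
    assume ne: "Y \<noteq> vecs R m"
    have Ysub: "Y \<subseteq> vecs R m" using YS unfolding is_subspace_def by auto
    obtain k y where y: "gi R m k y" "\<forall>j<k. y j \<in> Y" "spn R k y = Y"
      using subspace_basis[OF YS] by blast
    have yv: "\<forall>j<k. y j \<in> vecs R m" using gi_vecs[OF y(1)] .
    have "card Y < card (vecs R m)" using Ysub ne card_vecs(2) by (meson psubsetI psubset_card_mono)
    then have "q ^ k < q ^ m" using card_spn[OF y(1)] y(3) card_vecs(1) by simp
    then have km: "k < m" using q_ge2 by (simp add: power_less_imp_less_exp)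
    define X where "X = (\<lambda>i. {c \<in> vecs R m. \<forall>l<i. dot R m c (y l) = \<zero>})"
    have XS: "is_subspace R m (X i)" if "i \<le> k" for i
      unfolding is_subspace_def X_def
    proof (intro conjI ballI)
      show "{c \<in> vecs R m. \<forall>l<i. dot R m c (y l) = \<zero>} \<subseteq> vecs R m" by auto
      have "dot R m (vzero R) (y l) = \<zero>" if "l < i" for l
      proof -
        have yl: "y l \<in> vecs R m" using yv that \<open>i \<le> k\<close> by auto
        have "vsmult R \<zero> (vzero R) = vzero R" unfolding vsmult_def vzero_def by simp
        then show ?thesis using dot_smult_l[OF yl vzero_vec zero_closed] dot_carrier[OF vzero_vec yl] by simp
      qed
      then show "vzero R \<in> {c \<in> vecs R m. \<forall>l<i. dot R m c (y l) = \<zero>}" by simp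
    next
      fix u v assume u: "u \<in> {c \<in> vecs R m. \<forall>l<i. dot R m c (y l) = \<zero>}"
        and v: "v \<in> {c \<in> vecs R m. \<forall>l<i. dot R m c (y l) = \<zero>}"
      have "dot R m (vadd R u v) (y l) = \<zero>" if "l < i" for l
      proof -
        have yl: "y l \<in> vecs R m" using yv that \<open>i \<le> k\<close> by auto
        show ?thesis using dot_add_l[OF yl, of u v] u v that by simp
      qed
      then show "vadd R u v \<in> {c \<in> vecs R m. \<forall>l<i. dot R m c (y l) = \<zero>}" using u v by simp
    next
      fix a u assume a: "a \<in> F" and u: "u \<in> {c \<in> vecs R m. \<forall>l<i. dot R m c (y l) = \<zero>}"
      have "dot R m (vsmult R a u) (y l) = \<zero>" if "l < i" for l
      proof -
        have yl: "y l \<in> vecs R m" using yv that \<open>i \<le> k\<close> by auto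
        show ?thesis using dot_smult_l[OF yl, of u a] u a that by simp
      qed
      then show "vsmult R a u \<in> {c \<in> vecs R m. \<forall>l<i. dot R m c (y l) = \<zero>}" using u a by simp
    qed
    have Xc: "q ^ m \<le> q ^ i * card (X i)" if "i \<le> k" for i
      using that
    proof (induction i)
      case 0
      have "X 0 = vecs R m" unfolding X_def by simp
      then show ?case using card_vecs(1) by simp
    next
      case (Suc i)
      have ik: "i < k" using Suc.prems by simp
      have yi: "y i \<in> vecs R m" using yv ik by auto
      have XiS: "is_subspace R m (X i)" using XS ik by simp
      have XiV: "X i \<subseteq> vecs R m" using XiS unfolding is_subspace_def by auto
      have eqX: "X (Suc i) = {c \<in> X i. dot R m c (y i) = \<zero>}"
        unfolding X_def by (auto simp: less_Suc_eq)
      have "card (X i) \<le> q * card {c \<in> X i. dot R m c (y i) = \<zero>}"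
      proof (rule kernel_card[OF XiS])
        show "\<forall>x\<in>X i. \<forall>ya\<in>X i. dot R m (vadd R x ya) (y i) = dot R m x (y i) \<oplus> dot R m ya (y i)"
          using dot_add_l[OF yi] XiV by auto
        show "\<forall>a\<in>F. \<forall>x\<in>X i. dot R m (vsmult R a x) (y i) = a \<otimes> dot R m x (y i)"
          using dot_smult_l[OF yi] XiV by auto
        show "\<forall>x\<in>X i. dot R m x (y i) \<in> F" using dot_carrier yi XiV by auto
      qed
      then have "card (X i) \<le> q * card (X (Suc i))" using eqX by simp
      moreover have "q ^ m \<le> q ^ i * card (X i)" using Suc.IH ik by simp
      ultimately have "q ^ m \<le> q ^ i * (q * card (X (Suc i)))"
        by (meson le_trans mult_le_mono2)
      then show ?case by (simp add: mult.assoc mult.left_commute)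
    qed
    have "q ^ m \<le> q ^ k * card (X k)" using Xc by simp
    moreover have "q ^ m = q ^ k * q ^ (m - k)" using km by (simp add: power_add[symmetric])
    ultimately have "q ^ (m - k) \<le> card (X k)" using q_ge2 by simp
    moreover have "q \<le> q ^ (m - k)" using km q_ge2 by (simp add: self_le_power)
    ultimately have "card (X k) \<ge> 2" using q_ge2 by linarith
    then obtain c where c: "c \<in> X k" "c \<noteq> vzero R" using vec_nonzero[OF XS[of k]] by auto
    have cv: "c \<in> vecs R m" using c unfolding X_def by auto
    define K where "K = {w \<in> vecs R m. dot R m c w = \<zero>}"
    have KS: "is_subspace R m K"
      unfolding is_subspace_def K_def
      using dot_add_r[OF cv] dot_smult_r[OF cv] dot_zero_r[OF cv] by auto
    have "spn R k y \<subseteq> K" by (rule spn_sub[OF KS]) (use c yv in \<open>auto simp: X_def K_def\<close>)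
    then have YK: "Y \<subseteq> K" using y(3) by simp
    have cPi: "c \<in> {..<m} \<rightarrow> F" using vec_carrier[OF cv] by auto
    have wv: "lc R m c z \<in> vecs R n" by (rule lc_vec[OF cPi zv])
    have "lc R m c z = vzero R"
    proof (rule vec_eqI[OF wv vzero_vec])
      fix t assume t: "t < n"
      have "phi (uvec t) \<in> K" using YK uvec_vec[OF t] unfolding Y_def by auto
      then have "dot R m c (phi (uvec t)) = \<zero>" unfolding K_def by simp
      then have "dot R n (lc R m c z) (uvec t) = \<zero>"
        using dot_lc_swap[OF zv cv uvec_vec[OF t]] unfolding phi_def by simp
      then show "lc R m c z t = vzero R t" using dot_uvec[OF wv t] unfolding vzero_def by simp
    qed
    then have "\<forall>j<m. c j = \<zero>" using gi_indep[OF g cPi] by simp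
    then have "c = vzero R" using cv by (intro vec_eqI[OF cv vzero_vec]) (auto simp: vzero_def)
    then show False using c by simp
  qed
  define S where "S = {v \<in> vecs R n. \<forall>j<m. dot R n (z j) v = \<zero>}"
  define pre where "pre = (\<lambda>y. SOME x. x \<in> vecs R n \<and> phi x = y)"
  have pre: "pre y \<in> vecs R n \<and> phi (pre y) = y" if "y \<in> vecs R m" for y
  proof -
    have "y \<in> phi ` vecs R n" using that Yfull unfolding Y_def by simp
    then have "\<exists>x. x \<in> vecs R n \<and> phi x = y" by blast
    then show ?thesis unfolding pre_def by (rule someI_ex)
  qed
  have phiS: "phi s = vzero R" if "s \<in> S" for s
    using that unfolding S_def phi_def vzero_def by auto
  have SV: "S \<subseteq> vecs R n" unfolding S_def by auto
  define h where "h = (\<lambda>(y, s). vadd R (pre y) s)"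
  have "inj_on h (vecs R m \<times> S)"
  proof (rule inj_onI)
    fix p p' assume p: "p \<in> vecs R m \<times> S" and p': "p' \<in> vecs R m \<times> S" and e: "h p = h p'"
    obtain y s where ys: "p = (y, s)" by (cases p)
    obtain y' s' where ys': "p' = (y', s')" by (cases p')
    have y: "y \<in> vecs R m" "s \<in> S" using p ys by auto
    have y': "y' \<in> vecs R m" "s' \<in> S" using p' ys' by auto
    have e': "vadd R (pre y) s = vadd R (pre y') s'" using e ys ys' unfolding h_def by simp
    have "phi (vadd R (pre y) s) = y"
      using phi_add[of "pre y" s] pre[OF y(1)] SV y phiS vadd_zero_r by auto
    moreover have "phi (vadd R (pre y') s') = y'"
      using phi_add[of "pre y'" s'] pre[OF y'(1)] SV y' phiS vadd_zero_r by auto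
    ultimately have yy: "y = y'" using e' by simp
    have sv: "s \<in> vecs R n" "s' \<in> vecs R n" "pre y \<in> vecs R n" using SV y y' pre[OF y(1)] by auto
    have "s = s'"
    proof (rule vec_eqI[OF sv(1,2)])
      fix t
      have "pre y t \<oplus> s t = pre y t \<oplus> s' t" using fun_cong[OF e', of t] yy unfolding vadd_def by simp
      then show "s t = s' t" using vec_carrier[OF sv(1)] vec_carrier[OF sv(2)] vec_carrier[OF sv(3)]
        by (metis add.l_cancel)
    qed
    then show "p = p'" using ys ys' yy by simp
  qed
  moreover have "h ` (vecs R m \<times> S) \<subseteq> vecs R n"
    unfolding h_def using pre SV by auto
  ultimately have "card (vecs R m \<times> S) \<le> card (vecs R n)"
    using card_vecs(2) by (rule card_inj_on_le)
  then have "q ^ m * card S \<le> q ^ n" using card_vecs by (simp add: card_cartesian_product)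
  then show ?thesis unfolding S_def by (simp add: mult.commute)
qed

lemma pivot': assumes g: "gi R n m z"
  shows "card {v \<in> vecs R n. \<forall>j<m. dot R n (z j) v = \<zero>} \<le> q ^ (n - m)"
proof -
  have mn: "m \<le> n" using gi_bound[OF g] .
  have "card {v \<in> vecs R n. \<forall>j<m. dot R n (z j) v = \<zero>} * q ^ m \<le> q ^ (n - m) * q ^ m"
    using pivot[OF g] mn by (simp add: power_add[symmetric])
  then show ?thesis using q_ge2 by simp
qed

end



definition rw :: "nat ring \<Rightarrow> nat \<Rightarrow> (nat \<Rightarrow> nat \<Rightarrow> nat) \<Rightarrow> (nat \<Rightarrow> nat) \<Rightarrow> nat \<Rightarrow> nat" where
  "rw R n A u = (\<lambda>t. if t < n then \<Oplus>\<^bsub>R\<^esub> i\<in>{..<n}. u i \<otimes>\<^bsub>R\<^esub> A i t else \<zero>\<^bsub>R\<^esub>)"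

context ffld begin

lemma fl4: assumes "x \<in> F" "y \<in> F" "x \<oplus> \<ominus> \<one> \<otimes> y = \<zero>" shows "x = y"
proof -
  have "x = (x \<oplus> \<ominus> \<one> \<otimes> y) \<oplus> y" using assms(1,2) by algebra
  then show ?thesis using assms by simp
qed

lemma fl5: assumes "x \<in> F" shows "x \<oplus> \<ominus> \<one> \<otimes> x = \<zero>"
  using assms by algebra

lemma Aent: "alt_matrix R n A \<Longrightarrow> i < n \<Longrightarrow> j < n \<Longrightarrow> A i j \<in> F"
  unfolding alt_matrix_def by blast

lemma rw_vec: assumes A: "alt_matrix R n A" and u: "u \<in> vecs R n" shows "rw R n A u \<in> vecs R n"
  unfolding vecs_def rw_def using vec_carrier[OF u] Aent[OF A] by (auto intro!: finsum_closed)

lemma rw_app: "t < n \<Longrightarrow> rw R n A u t = (\<Oplus>i\<in>{..<n}. u i \<otimes> A i t)"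
  unfolding rw_def by simp

lemma rw_add: assumes A: "alt_matrix R n A" and u: "u \<in> vecs R n" and v: "v \<in> vecs R n"
  shows "rw R n A (vadd R u v) = vadd R (rw R n A u) (rw R n A v)"
proof (rule ext)
  fix t show "rw R n A (vadd R u v) t = vadd R (rw R n A u) (rw R n A v) t"
  proof (cases "t < n")
    case True
    have "rw R n A (vadd R u v) t = (\<Oplus>i\<in>{..<n}. u i \<otimes> A i t \<oplus> v i \<otimes> A i t)"
      unfolding rw_app[OF True] vadd_def using True vec_carrier[OF u] vec_carrier[OF v] Aent[OF A]
      by (intro finsum_cong') (auto simp: l_distr)
    also have "\<dots> = vadd R (rw R n A u) (rw R n A v) t"
      unfolding rw_app[OF True] vadd_def using True vec_carrier[OF u] vec_carrier[OF v] Aent[OF A]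
      by (intro finsum_addf) auto
    finally show ?thesis .
  next
    case False then show ?thesis unfolding rw_def vadd_def by simp
  qed
qed

lemma rw_smult: assumes A: "alt_matrix R n A" and u: "u \<in> vecs R n" and a: "a \<in> F"
  shows "rw R n A (vsmult R a u) = vsmult R a (rw R n A u)"
proof (rule ext)
  fix t show "rw R n A (vsmult R a u) t = vsmult R a (rw R n A u) t"
  proof (cases "t < n")
    case True
    have "rw R n A (vsmult R a u) t = (\<Oplus>i\<in>{..<n}. a \<otimes> (u i \<otimes> A i t))"
      unfolding rw_app[OF True] vsmult_def using True vec_carrier[OF u] Aent[OF A] a
      by (intro finsum_cong') (auto simp: m_assoc)
    also have "\<dots> = vsmult R a (rw R n A u) t"
      unfolding rw_app[OF True] vsmult_def using True vec_carrier[OF u] Aent[OF A] a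
      by (subst finsum_rdistr) auto
    finally show ?thesis .
  next
    case False then show ?thesis unfolding rw_def vsmult_def using a by simp
  qed
qed

lemma rw_zero: assumes A: "alt_matrix R n A" shows "rw R n A (vzero R) = vzero R"
proof -
  have "vsmult R \<zero> (vzero R) = vzero R" unfolding vsmult_def vzero_def by simp
  then have "rw R n A (vzero R) = vsmult R \<zero> (rw R n A (vzero R))"
    using rw_smult[OF A vzero_vec zero_closed] by simp
  also have "\<dots> = vzero R"
  proof (rule ext)
    fix t have "rw R n A (vzero R) t \<in> F" using vec_carrier[OF rw_vec[OF A vzero_vec]] by blast
    then show "vsmult R \<zero> (rw R n A (vzero R)) t = vzero R t" unfolding vsmult_def vzero_def[of R] by simp
  qed
  finally show ?thesis .
qed

lemma rw_lc: assumes A: "alt_matrix R n A" and z: "\<forall>j<m. z j \<in> vecs R n" and c: "c \<in> {..<m} \<rightarrow> F"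
  shows "rw R n A (lc R m c z) = lc R m c (\<lambda>j. rw R n A (z j))"
  using z c
proof (induction m)
  case 0
  have "lc R 0 c z = vzero R" "lc R 0 c (\<lambda>j. rw R n A (z j)) = vzero R" for z
    unfolding lc_def vzero_def by auto
  then show ?case using rw_zero[OF A] by simp
next
  case (Suc m)
  have zm: "\<forall>j<m. z j \<in> vecs R n" using Suc.prems by auto
  have cm: "c \<in> {..<m} \<rightarrow> F" using Suc.prems by auto
  have rz: "\<forall>j<Suc m. rw R n A (z j) \<in> vecs R n" using Suc.prems rw_vec[OF A] by auto
  have cmF: "c m \<in> F" using Suc.prems by auto
  have zmv: "z m \<in> vecs R n" using Suc.prems by auto
  have "rw R n A (lc R (Suc m) c z) = rw R n A (vadd R (lc R m c z) (vsmult R (c m) (z m)))"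
    using lc_Suc[OF Suc.prems(2,1)] by simp
  also have "\<dots> = vadd R (rw R n A (lc R m c z)) (vsmult R (c m) (rw R n A (z m)))"
    using rw_add[OF A lc_vec[OF cm zm] vsmult_vec[OF cmF zmv]] rw_smult[OF A zmv cmF] by simp
  also have "\<dots> = vadd R (lc R m c (\<lambda>j. rw R n A (z j))) (vsmult R (c m) (rw R n A (z m)))"
    using Suc.IH[OF zm cm] by simp
  also have "\<dots> = lc R (Suc m) c (\<lambda>j. rw R n A (z j))"
    using lc_Suc[OF Suc.prems(2) rz] by simp
  finally show ?case .
qed

lemma bilin_dot: assumes A: "alt_matrix R n A" and u: "u \<in> vecs R n" and v: "v \<in> vecs R n"
  shows "bilin R n A u v = dot R n (rw R n A u) v"
proof -
  have cu: "\<And>i. u i \<in> F" and cv: "\<And>i. v i \<in> F" using vec_carrier u v by auto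
  have "bilin R n A u v = (\<Oplus>j\<in>{..<n}. \<Oplus>i\<in>{..<n}. u i \<otimes> A i j \<otimes> v j)"
    unfolding bilin_def using cu cv Aent[OF A] by (intro finsum_swap) auto
  also have "\<dots> = dot R n (rw R n A u) v"
    unfolding dot_def
  proof (rule finsum_cong')
    show "(\<lambda>t. rw R n A u t \<otimes> v t) \<in> {..<n} \<rightarrow> F"
      using vec_carrier[OF rw_vec[OF A u]] cv by auto
    fix j assume j: "j \<in> {..<n}"
    then have jn: "j < n" by simp
    show "(\<Oplus>i\<in>{..<n}. u i \<otimes> A i j \<otimes> v j) = rw R n A u j \<otimes> v j"
      unfolding rw_app[OF jn] using cu cv Aent[OF A] jn by (subst finsum_ldistr) auto
  qed simp
  finally show ?thesis .
qed

lemma vsmult_zero: "c \<in> F \<Longrightarrow> vsmult R c (vzero R) = vzero R"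
  unfolding vsmult_def vzero_def by simp

definition kerA :: "nat \<Rightarrow> (nat \<Rightarrow> nat \<Rightarrow> nat) \<Rightarrow> (nat \<Rightarrow> nat) set" where
  "kerA n A = {x \<in> vecs R n. rw R n A x = vzero R}"

lemma kerA_subspace: assumes A: "alt_matrix R n A" shows "is_subspace R n (kerA n A)"
  unfolding is_subspace_def kerA_def
  using rw_add[OF A] rw_smult[OF A] rw_zero[OF A] vadd_zero_r[OF vzero_vec] vsmult_zero by auto

end


context ffld begin

lemma rank_witness: "\<exists>J. J \<subseteq> {..<n} \<and> cols_indep R n A J \<and> card J = mat_rank R n A"
proof -
  let ?S = "{card J | J. J \<subseteq> {..<n} \<and> cols_indep R n A J}"
  have fin: "finite ?S"
  proof -
    have "?S \<subseteq> card ` Pow {..<n}"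
    proof
      fix k assume "k \<in> ?S"
      then obtain J where "k = card J" "J \<subseteq> {..<n}" by blast
      then show "k \<in> card ` Pow {..<n}" by blast
    qed
    then show ?thesis by (rule finite_subset) simp
  qed
  have "cols_indep R n A {}" unfolding cols_indep_def by simp
  then have ne: "?S \<noteq> {}" by blast
  have "mat_rank R n A \<in> ?S" unfolding mat_rank_def using Max_in[OF fin ne] .
  then show ?thesis by auto
qed

lemma rank_le: "mat_rank R n A \<le> n"
proof -
  obtain J where "J \<subseteq> {..<n}" "card J = mat_rank R n A" using rank_witness by blast
  then show ?thesis using card_mono[of "{..<n}" J] by simp
qed

lemma card_kerA: assumes A: "alt_matrix R n A"
  shows "card (kerA n A) \<le> q ^ (n - mat_rank R n A)"
proof -
  obtain J where J: "J \<subseteq> {..<n}" "cols_indep R n A J" "card J = mat_rank R n A"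
    using rank_witness by blast
  let ?D = "{..<n} - J"
  have KS: "is_subspace R n (kerA n A)" by (rule kerA_subspace[OF A])
  have KV: "kerA n A \<subseteq> vecs R n" using KS unfolding is_subspace_def by auto
  have "inj_on (\<lambda>x. restrict x ?D) (kerA n A)"
  proof (rule inj_onI)
    fix x y assume x: "x \<in> kerA n A" and y: "y \<in> kerA n A" and e: "restrict x ?D = restrict y ?D"
    have xv: "x \<in> vecs R n" and yv: "y \<in> vecs R n" using x y KV by auto
    define d where "d = vadd R x (vsmult R (\<ominus> \<one>) y)"
    have dK: "d \<in> kerA n A" unfolding d_def using KS x y unfolding is_subspace_def by simp
    have dv: "d \<in> vecs R n" using dK KV by auto
    have dD: "d t = \<zero>" if "t < n" "t \<notin> J" for t
    proof -
      have "x t = y t" using fun_cong[OF e, of t] that by simp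
      then show ?thesis unfolding d_def vadd_def vsmult_def using fl5 vec_carrier[OF yv] by simp
    qed
    have rd: "rw R n A d = vzero R" using dK unfolding kerA_def by simp
    have "\<forall>j\<in>J. d j = \<zero>"
    proof -
      have h1: "\<forall>j\<in>J. d j \<in> F" using vec_carrier[OF dv] by simp
      have h2: "\<forall>i<n. (\<Oplus>j\<in>J. d j \<otimes> A i j) = \<zero>"
      proof (intro allI impI)
        fix i assume i: "i < n"
        have fJ: "finite J" using J(1) finite_subset by blast
        have cf: "(\<lambda>j. d j \<otimes> A j i) \<in> {..<n} \<rightarrow> F" using vec_carrier[OF dv] Aent[OF A] i by auto
        have T: "(\<Oplus>j\<in>J. d j \<otimes> A j i) = \<zero>"
        proof -
          have "(\<Oplus>j\<in>{..<n}. d j \<otimes> A j i) = (\<Oplus>j\<in>J. d j \<otimes> A j i)"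
            using J(1) dD cf vec_carrier[OF dv] Aent[OF A] i
            by (intro add.finprod_mono_neutral_cong_right) auto
          moreover have "(\<Oplus>j\<in>{..<n}. d j \<otimes> A j i) = \<zero>"
            using fun_cong[OF rd, of i] rw_app[OF i] unfolding vzero_def by simp
          ultimately show ?thesis by simp
        qed
        have neg: "d j \<otimes> A i j = \<ominus> (d j \<otimes> A j i)" if "j \<in> J" for j
        proof -
          have jn: "j < n" using that J(1) by auto
          have "A i j = \<ominus> A j i" using A i jn unfolding alt_matrix_def by blast
          then show ?thesis using vec_carrier[OF dv] Aent[OF A] i jn by (simp add: r_minus)
        qed
        have c1: "(\<lambda>j. \<ominus> (d j \<otimes> A j i)) \<in> J \<rightarrow> F" and c2: "(\<lambda>j. d j \<otimes> A j i) \<in> J \<rightarrow> F"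
          using vec_carrier[OF dv] Aent[OF A] i J(1) by auto
        have "(\<Oplus>j\<in>J. d j \<otimes> A i j) = (\<Oplus>j\<in>J. \<ominus> (d j \<otimes> A j i))"
          using neg c1 by (intro finsum_cong') auto
        also have "\<dots> = (\<Oplus>j\<in>J. \<ominus> (d j \<otimes> A j i)) \<oplus> (\<Oplus>j\<in>J. d j \<otimes> A j i)"
          using T c1 by (simp add: finsum_closed)
        also have "\<dots> = (\<Oplus>j\<in>J. \<ominus> (d j \<otimes> A j i) \<oplus> d j \<otimes> A j i)"
          using c1 c2 by (simp add: finsum_addf)
        also have "\<dots> = (\<Oplus>j\<in>J. \<zero>)"
        proof (rule finsum_cong')
          fix j assume "j \<in> J"
          then have "j < n" using J(1) by auto
          then have "d j \<otimes> A j i \<in> F" using vec_carrier[OF dv] Aent[OF A] i by simp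
          then show "\<ominus> (d j \<otimes> A j i) \<oplus> d j \<otimes> A j i = \<zero>" by (simp add: l_neg)
        qed auto
        also have "\<dots> = \<zero>" by simp
        finally show "(\<Oplus>j\<in>J. d j \<otimes> A i j) = \<zero>" .
      qed
      show ?thesis using J(2)[unfolded cols_indep_def, THEN spec[of _ d]] h1 h2 by blast
    qed
    then have "d = vzero R" using dD dv by (intro vec_eqI[OF dv vzero_vec]) (auto simp: vzero_def)
    then show "x = y"
    proof (intro vec_eqI[OF xv yv])
      fix t assume "d = vzero R"
      then have "x t \<oplus> \<ominus> \<one> \<otimes> y t = \<zero>" using fun_cong[of d "vzero R" t] unfolding d_def vadd_def vsmult_def vzero_def by simp
      then show "x t = y t" using fl4 vec_carrier[OF xv] vec_carrier[OF yv] by blast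
    qed
  qed
  moreover have "(\<lambda>x. restrict x ?D) ` kerA n A \<subseteq> PiE ?D (\<lambda>_. F)"
  proof
    fix u assume "u \<in> (\<lambda>x. restrict x ?D) ` kerA n A"
    then obtain x where x: "x \<in> kerA n A" "u = restrict x ?D" by blast
    then have "x \<in> vecs R n" using KV by auto
    then show "u \<in> PiE ?D (\<lambda>_. F)" using x(2) by (simp add: vec_carrier)
  qed
  moreover have "finite (PiE ?D (\<lambda>_. F))" using finR by (simp add: finite_PiE)
  ultimately have "card (kerA n A) \<le> card (PiE ?D (\<lambda>_. F))" by (rule card_inj_on_le)
  also have "\<dots> = q ^ card ?D" by (simp add: card_PiE)
  also have "card ?D = n - mat_rank R n A" using J by (simp add: card_Diff_subset finite_subset)
  finally show ?thesis .
qed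

end


context ffld begin

lemma gi_cong: assumes g: "gi R n m z" and e: "\<forall>j<m. z' j = z j" shows "gi R n m z'"
  unfolding gi_def
proof (intro allI impI)
  fix i assume i: "i < m"
  have zv: "\<forall>j<i. z j \<in> vecs R n" using gi_vecs[OF g] i by auto
  have "spn R i z' = spn R i z" by (rule spn_cong[OF zv]) (use e i in auto)
  then show "z' i \<in> vecs R n \<and> z' i \<notin> spn R i z'" using g e i unfolding gi_def by auto
qed

definition Gs :: "nat \<Rightarrow> (nat \<Rightarrow> nat) list \<Rightarrow> (nat \<Rightarrow> nat) set \<Rightarrow> nat \<Rightarrow> (nat \<Rightarrow> nat) list set" where
  "Gs n p X m = {ys. length ys = m \<and> set ys \<subseteq> X \<and> gi R n (length p + m) (\<lambda>j. (p @ ys) ! j)}"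

lemma Gs_finite: assumes X: "is_subspace R n X" shows "finite (Gs n p X m)"
proof -
  have "finite X" using subspace_card(2)[OF X] .
  then have "finite {ys. set ys \<subseteq> X \<and> length ys = m}" by (rule finite_lists_length_eq)
  moreover have "Gs n p X m \<subseteq> {ys. set ys \<subseteq> X \<and> length ys = m}" unfolding Gs_def by auto
  ultimately show ?thesis using finite_subset by blast
qed

lemma Gs_card: assumes X: "is_subspace R n X" and cX: "card X = q ^ d"
  and gp: "gi R n (length p) (\<lambda>j. p ! j)" and pX: "set p \<subseteq> X" and le: "length p + m \<le> d"
  shows "q ^ ((d - 1) * m) \<le> card (Gs n p X m)"
  using le
proof (induction m)
  case 0
  have "Gs n p X 0 = {[]}" unfolding Gs_def using gp by auto
  then show ?case by simp
next
  case (Suc m)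
  let ?k = "length p + m"
  have XV: "X \<subseteq> vecs R n" using X unfolding is_subspace_def by auto
  have IH: "q ^ ((d - 1) * m) \<le> card (Gs n p X m)" using Suc by simp
  define Sg where "Sg = Sigma (Gs n p X m) (\<lambda>ys. X - spn R ?k (\<lambda>j. (p @ ys) ! j))"
  define f where "f = (\<lambda>(ys :: (nat \<Rightarrow> nat) list, v :: nat \<Rightarrow> nat). ys @ [v])"
  have finX: "finite X" using subspace_card(2)[OF X] .
  have d1: "d \<ge> 1" using Suc.prems by simp
  have each: "q ^ (d - 1) \<le> card (X - spn R ?k (\<lambda>j. (p @ ys) ! j))" if ys: "ys \<in> Gs n p X m" for ys
  proof -
    have g: "gi R n ?k (\<lambda>j. (p @ ys) ! j)" using ys unfolding Gs_def by simp
    have inX: "\<forall>j<?k. (p @ ys) ! j \<in> X"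
    proof (intro allI impI)
      fix j assume "j < ?k"
      then have "j < length (p @ ys)" using ys unfolding Gs_def by simp
      then have "(p @ ys) ! j \<in> set (p @ ys)" by (rule nth_mem)
      then show "(p @ ys) ! j \<in> X" using ys pX unfolding Gs_def by auto
    qed
    have sub: "spn R ?k (\<lambda>j. (p @ ys) ! j) \<subseteq> X" by (rule spn_sub[OF X inX])
    have cs: "card (spn R ?k (\<lambda>j. (p @ ys) ! j)) = q ^ ?k" by (rule card_spn[OF g])
    have "card (X - spn R ?k (\<lambda>j. (p @ ys) ! j)) = q ^ d - q ^ ?k"
      using card_Diff_subset[OF finite_subset[OF sub finX] sub] cX cs by simp
    moreover have "q ^ ?k \<le> q ^ (d - 1)" using Suc.prems q_ge2 by (intro power_increasing) auto
    moreover have "q ^ d = q * q ^ (d - 1)" using d1 by (metis Suc_diff_1 less_le_trans power_Suc zero_less_one)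
    moreover have "2 * q ^ (d - 1) \<le> q * q ^ (d - 1)" using q_ge2 by simp
    ultimately show ?thesis by linarith
  qed
  have finS: "finite Sg" unfolding Sg_def using Gs_finite[OF X] finX by auto
  have "card Sg = (\<Sum>ys\<in>Gs n p X m. card (X - spn R ?k (\<lambda>j. (p @ ys) ! j)))"
    unfolding Sg_def using Gs_finite[OF X] finX by (intro card_SigmaI) auto
  also have "\<dots> \<ge> (\<Sum>ys\<in>Gs n p X m. q ^ (d - 1))" using each by (intro sum_mono) auto
  finally have cS: "card Sg \<ge> card (Gs n p X m) * q ^ (d - 1)" by simp
  have inj: "inj_on f Sg" unfolding f_def by (intro inj_onI) auto
  have img: "f ` Sg \<subseteq> Gs n p X (Suc m)"
  proof
    fix w assume "w \<in> f ` Sg"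
    then obtain ys v where yv: "ys \<in> Gs n p X m" "v \<in> X" "v \<notin> spn R ?k (\<lambda>j. (p @ ys) ! j)" "w = ys @ [v]"
      unfolding Sg_def f_def by auto
    have g: "gi R n ?k (\<lambda>j. (p @ ys) ! j)" and ly: "length ys = m" using yv unfolding Gs_def by auto
    have "gi R n (Suc ?k) (\<lambda>j. (p @ ys @ [v]) ! j)"
      unfolding gi_def
    proof (intro allI impI)
      fix i assume i: "i < Suc ?k"
      have zv: "\<forall>j<i. (p @ ys) ! j \<in> vecs R n" using gi_vecs[OF g] i by auto
      have sc: "spn R i (\<lambda>j. (p @ ys @ [v]) ! j) = spn R i (\<lambda>j. (p @ ys) ! j)"
      proof (rule spn_cong[OF zv], intro allI impI)
        fix j assume "j < i"
        then have jl: "j < length (p @ ys)" using i ly by simp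
        have "(p @ ys @ [v]) = (p @ ys) @ [v]" by simp
        then show "(p @ ys @ [v]) ! j = (p @ ys) ! j" using jl by (simp only: nth_append if_True)
      qed
      show "(p @ ys @ [v]) ! i \<in> vecs R n \<and> (p @ ys @ [v]) ! i \<notin> spn R i (\<lambda>j. (p @ ys @ [v]) ! j)"
      proof (cases "i = ?k")
        case True
        have "(p @ ys @ [v]) ! i = v" using True ly by (simp add: nth_append)
        then show ?thesis using sc True yv XV by auto
      next
        case False
        then have ik: "i < ?k" using i by simp
        have jl: "i < length (p @ ys)" using ik ly by simp
        have "(p @ ys @ [v]) = (p @ ys) @ [v]" by simp
        then have "(p @ ys @ [v]) ! i = (p @ ys) ! i" using jl by (simp only: nth_append if_True)
        then show ?thesis using sc g ik unfolding gi_def by simp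
      qed
    qed
    then show "w \<in> Gs n p X (Suc m)" using yv unfolding Gs_def by auto
  qed
  have "card (f ` Sg) = card Sg" by (rule card_image[OF inj])
  then have "card Sg \<le> card (Gs n p X (Suc m))"
    using card_mono[OF Gs_finite[OF X] img] by simp
  then have "card (Gs n p X m) * q ^ (d - 1) \<le> card (Gs n p X (Suc m))" using cS by simp
  moreover have "q ^ ((d - 1) * Suc m) = q ^ ((d - 1) * m) * q ^ (d - 1)"
  proof -
    have "(d - 1) * Suc m = (d - 1) * m + (d - 1)" by (simp only: mult_Suc_right add.commute)
    then show ?thesis by (simp only: power_add)
  qed
  moreover have "q ^ ((d - 1) * m) * q ^ (d - 1) \<le> card (Gs n p X m) * q ^ (d - 1)"
    using IH by simp
  ultimately show ?case by linarith
qed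

end


context ffld begin

definition Bs :: "nat \<Rightarrow> (nat \<Rightarrow> nat \<Rightarrow> nat) \<Rightarrow> nat \<Rightarrow> (nat \<Rightarrow> nat) list set" where
  "Bs n A b = {ys. length ys = b \<and> set ys \<subseteq> vecs R n \<and> gi R n b (\<lambda>j. rw R n A (ys ! j)) \<and>
      (\<forall>i<b. \<forall>j<i. dot R n (rw R n A (ys ! j)) (ys ! i) = \<zero>)}"

lemma Bs_finite: "finite (Bs n A b)"
proof -
  have "finite {ys. set ys \<subseteq> vecs R n \<and> length ys = b}" by (rule finite_lists_length_eq[OF card_vecs(2)])
  moreover have "Bs n A b \<subseteq> {ys. set ys \<subseteq> vecs R n \<and> length ys = b}" unfolding Bs_def by auto
  ultimately show ?thesis using finite_subset by blast
qed

lemma Bs_card: assumes A: "alt_matrix R n A"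
  shows "card (Bs n A b) \<le> q ^ (\<Sum>i<b. n - i)"
proof (induction b)
  case 0
  have "Bs n A 0 \<subseteq> {[]}" unfolding Bs_def by auto
  then have "card (Bs n A 0) \<le> card {[] :: (nat \<Rightarrow> nat) list}" by (intro card_mono) auto
  then show ?case by simp
next
  case (Suc b)
  define Sv where "Sv = (\<lambda>ys. {v \<in> vecs R n. \<forall>j<b. dot R n (rw R n A (ys ! j)) v = \<zero>})"
  define Sg where "Sg = Sigma (Bs n A b) Sv"
  define f where "f = (\<lambda>(ys :: (nat \<Rightarrow> nat) list, v :: nat \<Rightarrow> nat). ys @ [v])"
  have sub: "Bs n A (Suc b) \<subseteq> f ` Sg"
  proof
    fix zs assume zs: "zs \<in> Bs n A (Suc b)"
    have lz: "length zs = Suc b" using zs unfolding Bs_def by simp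
    define ys where "ys = butlast zs"
    define v where "v = last zs"
    have zsd: "zs = ys @ [v]" unfolding ys_def v_def using lz
      by (metis append_butlast_last_id list.size(3) nat.distinct(1))
    have ly: "length ys = b" using lz unfolding ys_def by simp
    have nth1: "zs ! j = ys ! j" if "j < b" for j using that ly zsd by (simp add: nth_append)
    have nth2: "zs ! b = v" using ly zsd by (simp add: nth_append)
    have g: "gi R n (Suc b) (\<lambda>j. rw R n A (zs ! j))" using zs unfolding Bs_def by simp
    have gy: "gi R n b (\<lambda>j. rw R n A (ys ! j))"
      by (rule gi_cong[OF gi_mono[OF g]]) (simp add: nth1)
    have ys_in: "ys \<in> Bs n A b"
      unfolding Bs_def
    proof (intro CollectI conjI)
      show "length ys = b" by (rule ly)
      show "set ys \<subseteq> vecs R n" using zs zsd unfolding Bs_def by auto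
      show "gi R n b (\<lambda>j. rw R n A (ys ! j))" by (rule gy)
      show "\<forall>i<b. \<forall>j<i. dot R n (rw R n A (ys ! j)) (ys ! i) = \<zero>"
      proof (intro allI impI)
        fix i j assume ij: "i < b" "j < i"
        have "dot R n (rw R n A (zs ! j)) (zs ! i) = \<zero>" using zs ij unfolding Bs_def by auto
        then show "dot R n (rw R n A (ys ! j)) (ys ! i) = \<zero>" using nth1 ij by simp
      qed
    qed
    have v_in: "v \<in> Sv ys"
      unfolding Sv_def
    proof (intro CollectI conjI allI impI)
      show "v \<in> vecs R n" using zs zsd unfolding Bs_def by auto
      fix j assume j: "j < b"
      have "\<forall>i<Suc b. \<forall>j<i. dot R n (rw R n A (zs ! j)) (zs ! i) = \<zero>" using zs unfolding Bs_def by simp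
      then have "dot R n (rw R n A (zs ! j)) (zs ! b) = \<zero>" using j by blast
      then show "dot R n (rw R n A (ys ! j)) v = \<zero>" using nth1[OF j] nth2 by simp
    qed
    show "zs \<in> f ` Sg" unfolding Sg_def f_def using ys_in v_in zsd by force
  qed
  have cSv: "card (Sv ys) \<le> q ^ (n - b)" if "ys \<in> Bs n A b" for ys
  proof -
    have "gi R n b (\<lambda>j. rw R n A (ys ! j))" using that unfolding Bs_def by simp
    then show ?thesis unfolding Sv_def by (rule pivot')
  qed
  have finSv: "finite (Sv ys)" for ys unfolding Sv_def using card_vecs(2) by simp
  have "card (Bs n A (Suc b)) \<le> card (f ` Sg)"
    using sub by (intro card_mono) (auto simp: Sg_def Bs_finite finSv)
  also have "\<dots> \<le> card Sg" by (rule card_image_le) (auto simp: Sg_def Bs_finite finSv)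
  also have "\<dots> = (\<Sum>ys\<in>Bs n A b. card (Sv ys))" unfolding Sg_def using Bs_finite finSv by simp
  also have "\<dots> \<le> (\<Sum>ys\<in>Bs n A b. q ^ (n - b))" using cSv by (intro sum_mono) auto
  also have "\<dots> = card (Bs n A b) * q ^ (n - b)" by simp
  also have "\<dots> \<le> q ^ (\<Sum>i<b. n - i) * q ^ (n - b)" using Suc.IH by simp
  also have "\<dots> = q ^ (\<Sum>i<Suc b. n - i)" by (simp add: power_add)
  finally show ?case .
qed

end


context ffld begin

lemma subspace_inter: assumes "is_subspace R n X" "is_subspace R n Y" shows "is_subspace R n (X \<inter> Y)"
  using assms unfolding is_subspace_def by auto

lemma spn_eq_card: assumes X: "is_subspace R n X" and cX: "card X = q ^ m" and g: "gi R n m z"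
  and zX: "\<forall>j<m. z j \<in> X" shows "spn R m z = X"
proof -
  have sub: "spn R m z \<subseteq> X" by (rule spn_sub[OF X zX])
  show ?thesis using card_subset_eq[OF subspace_card(2)[OF X] sub] card_spn[OF g] cX by simp
qed

definition Iso :: "nat \<Rightarrow> (nat \<Rightarrow> nat \<Rightarrow> nat) \<Rightarrow> nat \<Rightarrow> nat \<Rightarrow> (nat \<Rightarrow> nat) set set" where
  "Iso n A a b = {U. isotropic R n A U \<and> card (U \<inter> kerA n A) = q ^ a \<and> card U = q ^ (a + b)}"

definition TT :: "nat \<Rightarrow> (nat \<Rightarrow> nat \<Rightarrow> nat) \<Rightarrow> nat \<Rightarrow> nat \<Rightarrow> (nat \<Rightarrow> nat) set \<Rightarrow> ((nat \<Rightarrow> nat) list \<times> (nat \<Rightarrow> nat) list) set" where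
  "TT n A a b U = Sigma (Gs n [] (U \<inter> kerA n A) a) (\<lambda>xs. Gs n xs U b)"

lemma TT_basic: assumes A: "alt_matrix R n A" and U: "U \<in> Iso n A a b" and p: "(xs, ys) \<in> TT n A a b U"
  shows "length xs = a" "set xs \<subseteq> U \<inter> kerA n A" "gi R n a (\<lambda>j. xs ! j)"
    "length ys = b" "set ys \<subseteq> U" "gi R n (a + b) (\<lambda>j. (xs @ ys) ! j)"
  using p unfolding TT_def Gs_def by auto

lemma TT_spn: assumes A: "alt_matrix R n A" and U: "U \<in> Iso n A a b" and p: "(xs, ys) \<in> TT n A a b U"
  shows "spn R (a + b) (\<lambda>j. (xs @ ys) ! j) = U"
proof -
  note tb = TT_basic[OF A U p]
  have US: "is_subspace R n U" using U unfolding Iso_def isotropic_def by auto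
  have cU: "card U = q ^ (a + b)" using U unfolding Iso_def by auto
  have "\<forall>j<a + b. (xs @ ys) ! j \<in> U"
  proof (intro allI impI)
    fix j assume "j < a + b"
    then have "j < length (xs @ ys)" using tb by simp
    then have "(xs @ ys) ! j \<in> set (xs @ ys)" by (rule nth_mem)
    then show "(xs @ ys) ! j \<in> U" using tb by auto
  qed
  then show ?thesis using spn_eq_card[OF US cU tb(6)] by simp
qed

lemma TT_B: assumes A: "alt_matrix R n A" and U: "U \<in> Iso n A a b" and p: "(xs, ys) \<in> TT n A a b U"
  shows "ys \<in> Bs n A b"
proof -
  note tb = TT_basic[OF A U p]
  have iso: "isotropic R n A U" using U unfolding Iso_def by auto
  have US: "is_subspace R n U" using iso unfolding isotropic_def by auto
  have UV: "U \<subseteq> vecs R n" using US unfolding is_subspace_def by auto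
  have KS: "is_subspace R n (kerA n A)" by (rule kerA_subspace[OF A])
  have WS: "is_subspace R n (U \<inter> kerA n A)" by (rule subspace_inter[OF US KS])
  have cW: "card (U \<inter> kerA n A) = q ^ a" using U unfolding Iso_def by auto
  have yU: "ys ! j \<in> U" if "j < b" for j using tb that nth_mem by (metis subsetD)
  have xW: "xs ! j \<in> U \<inter> kerA n A" if "j < a" for j using tb that nth_mem by (metis subsetD)
  have W: "spn R a (\<lambda>j. xs ! j) = U \<inter> kerA n A"
    by (rule spn_eq_card[OF WS cW tb(3)]) (use xW in auto)
  have nx: "(xs @ ys) ! j = xs ! j" if "j < a" for j using that tb by (simp add: nth_append)
  have ny: "(xs @ ys) ! (a + j) = ys ! j" for j using tb by (simp add: nth_append)
  have gvec: "\<forall>j<a + b. (xs @ ys) ! j \<in> vecs R n" using gi_vecs[OF tb(6)] .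
  have rows_gi: "gi R n b (\<lambda>j. rw R n A (ys ! j))"
    unfolding gi_def
  proof (intro allI impI conjI)
    fix i assume i: "i < b"
    show "rw R n A (ys ! i) \<in> vecs R n" using rw_vec[OF A] yU[OF i] UV by auto
    show "rw R n A (ys ! i) \<notin> spn R i (\<lambda>j. rw R n A (ys ! j))"
    proof
      assume "rw R n A (ys ! i) \<in> spn R i (\<lambda>j. rw R n A (ys ! j))"
      then obtain c where c: "c \<in> {..<i} \<rightarrow> F" "rw R n A (ys ! i) = lc R i c (\<lambda>j. rw R n A (ys ! j))"
        unfolding spn_def by blast
      have yv: "\<forall>j<i. ys ! j \<in> vecs R n" using yU i UV by auto
      have yiv: "ys ! i \<in> vecs R n" using yU[OF i] UV by auto
      define l where "l = lc R i c (\<lambda>j. ys ! j)"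
      have lv: "l \<in> vecs R n" unfolding l_def by (rule lc_vec[OF c(1) yv])
      have rl: "rw R n A l = rw R n A (ys ! i)" unfolding l_def using rw_lc[OF A yv c(1)] c(2) by simp
      have lU: "l \<in> U"
      proof -
        have "spn R i (\<lambda>j. ys ! j) \<subseteq> U" by (rule spn_sub[OF US]) (use yU i in auto)
        moreover have "l \<in> spn R i (\<lambda>j. ys ! j)" unfolding l_def spn_def using c(1) by blast
        ultimately show ?thesis by blast
      qed
      define y where "y = vadd R (ys ! i) (vsmult R (\<ominus> \<one>) l)"
      have yUU: "y \<in> U" unfolding y_def using US yU[OF i] lU unfolding is_subspace_def by simp
      have yyv: "y \<in> vecs R n" using yUU UV by auto
      have "rw R n A y = vadd R (rw R n A (ys ! i)) (vsmult R (\<ominus> \<one>) (rw R n A l))"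
        unfolding y_def using rw_add[OF A yiv vsmult_vec[OF _ lv]] rw_smult[OF A lv] by simp
      also have "\<dots> = vzero R"
      proof (rule vec_eqI[where n=n])
        show "vadd R (rw R n A (ys ! i)) (vsmult R (\<ominus> \<one>) (rw R n A l)) \<in> vecs R n"
          using rw_vec[OF A yiv] rw_vec[OF A lv] by simp
        show "vzero R \<in> vecs R n" by simp
        fix t
        show "vadd R (rw R n A (ys ! i)) (vsmult R (\<ominus> \<one>) (rw R n A l)) t = vzero R t"
          using rl fl5[OF vec_carrier[OF rw_vec[OF A yiv]]] unfolding vadd_def vsmult_def vzero_def by simp
      qed
      finally have "y \<in> kerA n A" using yyv unfolding kerA_def by simp
      then have yW: "y \<in> spn R a (\<lambda>j. xs ! j)" using W yUU by simp
      define Z where "Z = spn R (a + i) (\<lambda>j. (xs @ ys) ! j)"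
      have ZS: "is_subspace R n Z" unfolding Z_def by (rule spn_subspace) (use gvec i in auto)
      have "spn R a (\<lambda>j. xs ! j) \<subseteq> Z"
      proof (rule spn_sub[OF ZS], intro allI impI)
        fix j assume j: "j < a"
        have "(xs @ ys) ! j \<in> Z" unfolding Z_def by (rule in_spn[where n=n]) (use j gvec i in auto)
        then show "xs ! j \<in> Z" using nx[OF j] by simp
      qed
      then have yZ: "y \<in> Z" using yW by blast
      have "spn R i (\<lambda>j. ys ! j) \<subseteq> Z"
      proof (rule spn_sub[OF ZS], intro allI impI)
        fix j assume j: "j < i"
        have "(xs @ ys) ! (a + j) \<in> Z" unfolding Z_def by (rule in_spn[where n=n]) (use j gvec i in auto)
        then show "ys ! j \<in> Z" using ny by simp
      qed
      moreover have "l \<in> spn R i (\<lambda>j. ys ! j)" unfolding l_def spn_def using c(1) by blast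
      ultimately have lZ: "l \<in> Z" by blast
      have "vadd R y l = ys ! i"
      proof (rule vec_eqI[where n=n])
        show "vadd R y l \<in> vecs R n" using yyv lv by simp
        show "ys ! i \<in> vecs R n" by (rule yiv)
        fix t
        have "y t = (ys ! i) t \<oplus> \<ominus> \<one> \<otimes> l t" unfolding y_def vadd_def vsmult_def by simp
        then show "vadd R y l t = (ys ! i) t" unfolding vadd_def
          using vec_carrier[OF yiv] vec_carrier[OF lv] by (simp add: a_assoc l_minus l_neg)
      qed
      then have "ys ! i \<in> Z" using yZ lZ ZS unfolding is_subspace_def by metis
      moreover have "(xs @ ys) ! (a + i) \<notin> Z" using tb(6) i unfolding gi_def Z_def by simp
      ultimately show False using ny by simp
    qed
  qed
  have orth: "\<forall>i<b. \<forall>j<i. dot R n (rw R n A (ys ! j)) (ys ! i) = \<zero>"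
  proof (intro allI impI)
    fix i j assume ij: "i < b" "j < i"
    have "bilin R n A (ys ! j) (ys ! i) = \<zero>" using iso yU ij unfolding isotropic_def by auto
    then show "dot R n (rw R n A (ys ! j)) (ys ! i) = \<zero>"
      using bilin_dot[OF A] yU ij UV by (metis less_trans subsetD)
  qed
  show ?thesis unfolding Bs_def using tb UV rows_gi orth by auto
qed

end


context ffld begin

lemma TT_card: assumes A: "alt_matrix R n A" and U: "U \<in> Iso n A a b"
  shows "q ^ ((a - 1) * a) * q ^ ((a + b - 1) * b) \<le> card (TT n A a b U)" "finite (TT n A a b U)"
proof -
  have iso: "isotropic R n A U" using U unfolding Iso_def by auto
  have US: "is_subspace R n U" using iso unfolding isotropic_def by auto
  have KS: "is_subspace R n (kerA n A)" by (rule kerA_subspace[OF A])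
  have WS: "is_subspace R n (U \<inter> kerA n A)" by (rule subspace_inter[OF US KS])
  have cW: "card (U \<inter> kerA n A) = q ^ a" and cU: "card U = q ^ (a + b)" using U unfolding Iso_def by auto
  have g0: "gi R n (length []) (\<lambda>j. ([] :: (nat \<Rightarrow> nat) list) ! j)" unfolding gi_def by simp
  have c1: "q ^ ((a - 1) * a) \<le> card (Gs n [] (U \<inter> kerA n A) a)"
    using Gs_card[OF WS cW g0] by simp
  have c2: "q ^ ((a + b - 1) * b) \<le> card (Gs n xs U b)" if xs: "xs \<in> Gs n [] (U \<inter> kerA n A) a" for xs
  proof -
    have lx: "length xs = a" and sx: "set xs \<subseteq> U" and gx: "gi R n a (\<lambda>j. xs ! j)"
      using xs unfolding Gs_def by auto
    show ?thesis using Gs_card[OF US cU, of xs b] lx sx gx by simp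
  qed
  have fin1: "finite (Gs n [] (U \<inter> kerA n A) a)" by (rule Gs_finite[OF WS])
  have fin2: "\<forall>xs. finite (Gs n xs U b)" using Gs_finite[OF US] by blast
  have "card (TT n A a b U) = (\<Sum>xs\<in>Gs n [] (U \<inter> kerA n A) a. card (Gs n xs U b))"
    unfolding TT_def using fin1 fin2 by simp
  also have "\<dots> \<ge> (\<Sum>xs\<in>Gs n [] (U \<inter> kerA n A) a. q ^ ((a + b - 1) * b))"
    using c2 by (intro sum_mono) auto
  finally have "card (TT n A a b U) \<ge> card (Gs n [] (U \<inter> kerA n A) a) * q ^ ((a + b - 1) * b)" by simp
  moreover have "q ^ ((a - 1) * a) * q ^ ((a + b - 1) * b) \<le> card (Gs n [] (U \<inter> kerA n A) a) * q ^ ((a + b - 1) * b)"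
    using c1 by simp
  ultimately show "q ^ ((a - 1) * a) * q ^ ((a + b - 1) * b) \<le> card (TT n A a b U)" by linarith
  show "finite (TT n A a b U)" unfolding TT_def using fin1 fin2 by simp
qed

lemma Iso_finite: "finite (Iso n A a b)"
proof -
  have "Iso n A a b \<subseteq> Pow (vecs R n)" unfolding Iso_def isotropic_def is_subspace_def by auto
  then show ?thesis using card_vecs(2) finite_subset by blast
qed

lemma count_ab: assumes A: "alt_matrix R n A"
  shows "card (Iso n A a b) * (q ^ ((a - 1) * a) * q ^ ((a + b - 1) * b))
         \<le> card (kerA n A) ^ a * q ^ (\<Sum>i<b. n - i)"
proof -
  let ?I = "Iso n A a b"
  let ?Kl = "{xs. set xs \<subseteq> kerA n A \<and> length xs = a}"
  have KS: "is_subspace R n (kerA n A)" by (rule kerA_subspace[OF A])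
  have finK: "finite (kerA n A)" using subspace_card(2)[OF KS] .
  have disj: "\<forall>U\<in>?I. \<forall>U'\<in>?I. U \<noteq> U' \<longrightarrow> TT n A a b U \<inter> TT n A a b U' = {}"
  proof (intro ballI impI)
    fix U U' assume U: "U \<in> ?I" and U': "U' \<in> ?I" and ne: "U \<noteq> U'"
    show "TT n A a b U \<inter> TT n A a b U' = {}"
    proof (rule ccontr)
      assume "TT n A a b U \<inter> TT n A a b U' \<noteq> {}"
      then obtain xs ys where "(xs, ys) \<in> TT n A a b U" "(xs, ys) \<in> TT n A a b U'" by auto
      then show False using TT_spn[OF A U] TT_spn[OF A U'] ne by metis
    qed
  qed
  have "(\<Sum>U\<in>?I. card (TT n A a b U)) = card (\<Union>U\<in>?I. TT n A a b U)"
    using Iso_finite TT_card(2)[OF A] disj by (intro card_UN_disjoint[symmetric]) auto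
  also have "\<dots> \<le> card (?Kl \<times> Bs n A b)"
  proof (rule card_mono)
    show "finite (?Kl \<times> Bs n A b)" using finite_lists_length_eq[OF finK] Bs_finite by simp
    show "(\<Union>U\<in>?I. TT n A a b U) \<subseteq> ?Kl \<times> Bs n A b"
    proof
      fix p assume "p \<in> (\<Union>U\<in>?I. TT n A a b U)"
      then obtain U where U: "U \<in> ?I" and pU: "p \<in> TT n A a b U" by blast
      obtain xs ys where p: "p = (xs, ys)" by (cases p)
      have "xs \<in> ?Kl" using TT_basic[OF A U pU[unfolded p]] by auto
      moreover have "ys \<in> Bs n A b" using TT_B[OF A U pU[unfolded p]] .
      ultimately show "p \<in> ?Kl \<times> Bs n A b" using p by simp
    qed
  qed
  also have "\<dots> = card (kerA n A) ^ a * card (Bs n A b)"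
    using card_lists_length_eq[OF finK] by (simp add: card_cartesian_product)
  also have "\<dots> \<le> card (kerA n A) ^ a * q ^ (\<Sum>i<b. n - i)"
    using Bs_card[OF A] by simp
  finally have up: "(\<Sum>U\<in>?I. card (TT n A a b U)) \<le> card (kerA n A) ^ a * q ^ (\<Sum>i<b. n - i)" .
  have "(\<Sum>U\<in>?I. q ^ ((a - 1) * a) * q ^ ((a + b - 1) * b)) \<le> (\<Sum>U\<in>?I. card (TT n A a b U))"
    using TT_card(1)[OF A] by (intro sum_mono) auto
  then have "card ?I * (q ^ ((a - 1) * a) * q ^ ((a + b - 1) * b)) \<le> (\<Sum>U\<in>?I. card (TT n A a b U))"
    by simp
  then show ?thesis using up by linarith
qed

end



lemma main_ineq:
  fixes a b s n :: real
  assumes a: "0 \<le> a" and b: "0 \<le> b" and s: "0 \<le> s" and sn: "3 * s \<le> n"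
  shows "a * (s - a - b) + b * n - 3 * b^2 / 2 \<le> n^2 / 6"
proof (cases "s \<le> b")
  case True
  have "a * (s - a - b) \<le> 0" using a True by (intro mult_nonneg_nonpos) auto
  moreover have "0 \<le> (n - 3 * b)^2 / 6" by simp
  moreover have "(n - 3 * b)^2 / 6 = n^2 / 6 - b * n + 3 * b^2 / 2" by (simp add: power2_eq_square field_simps)
  ultimately show ?thesis by linarith
next
  case False
  have "0 \<le> (s - b - 2 * a)^2" by simp
  moreover have "(s - b - 2 * a)^2 = (s - b)^2 - 4 * (a * (s - a - b))" by (simp add: power2_eq_square field_simps)
  ultimately have h1: "a * (s - a - b) \<le> (s - b)^2 / 4" by linarith
  have "0 \<le> (s - b) * (n - 7 * s / 4 - 5 * b / 4)" using False sn b by (intro mult_nonneg_nonneg) auto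
  moreover have "(s - b) * (n - 7 * s / 4 - 5 * b / 4) = (s * n - 3 * s^2 / 2) - (b * n - 3 * b^2 / 2 + (s - b)^2 / 4)"
    by (simp add: power2_eq_square field_simps)
  moreover have "0 \<le> (n - 3 * s)^2 / 6" by simp
  moreover have "(n - 3 * s)^2 / 6 = n^2 / 6 - s * n + 3 * s^2 / 2" by (simp add: power2_eq_square field_simps)
  ultimately show ?thesis using h1 by linarith
qed

lemma sum_diff_real: assumes "b \<le> n" shows "2 * real (\<Sum>i<b. n - i) = 2 * real b * real n - real b * (real b - 1)"
  using assms
proof (induction b)
  case 0 then show ?case by simp
next
  case (Suc b)
  have "real (\<Sum>i<Suc b. n - i) = real (\<Sum>i<b. n - i) + (real n - real b)" using Suc.prems by (simp add: of_nat_diff)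
  then show ?case using Suc by (simp add: algebra_simps)
qed

lemma pow4: "(real n + 1)^2 \<le> 4 ^ n" if "n \<ge> 1"
  using that
proof (induction n rule: dec_induct)
  case base then show ?case by simp
next
  case (step k)
  have "(real (Suc k) + 1)^2 \<le> 4 * (real k + 1)^2" by (simp add: power2_eq_square field_simps)
  also have "\<dots> \<le> 4 * 4 ^ k" using step by simp
  finally show ?case by simp
qed


context ffld begin

lemma iso_cover: assumes A: "alt_matrix R n A" and U: "isotropic R n A U"
  shows "\<exists>a\<le>n. \<exists>b\<le>n. U \<in> Iso n A a b"
proof -
  have US: "is_subspace R n U" using U unfolding isotropic_def by auto
  have KS: "is_subspace R n (kerA n A)" by (rule kerA_subspace[OF A])
  have WS: "is_subspace R n (U \<inter> kerA n A)" by (rule subspace_inter[OF US KS])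
  obtain k where k: "k \<le> n" "card U = q ^ k" using subspace_card(1)[OF US] by blast
  obtain a where a: "a \<le> n" "card (U \<inter> kerA n A) = q ^ a" using subspace_card(1)[OF WS] by blast
  have "card (U \<inter> kerA n A) \<le> card U" using subspace_card(2)[OF US] by (intro card_mono) auto
  then have "q ^ a \<le> q ^ k" using a k by simp
  then have ak: "a \<le> k" using q_ge2 by (simp add: power_le_imp_le_exp)
  have "U \<in> Iso n A a (k - a)" unfolding Iso_def using U a k ak by simp
  moreover have "k - a \<le> n" using k by simp
  ultimately show ?thesis using a by blast
qed

lemma Iso_bound: assumes A: "alt_matrix R n A" and rk: "3 * real (n - mat_rank R n A) \<le> real n"
  and an: "a \<le> n" and bn: "b \<le> n"
  shows "real (card (Iso n A a b)) \<le> real q powr (real n ^ 2 / 6 + 3 * real n)"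
proof -
  define s where "s = n - mat_rank R n A"
  define X where "X = (\<Sum>i<b. n - i)"
  define Y where "Y = (a - 1) * a + (a + b - 1) * b"
  have qpos: "(0::real) < real q" using q_ge2 by simp
  have q1: "(1::real) \<le> real q" using q_ge2 by simp
  have "card (Iso n A a b) * q ^ Y \<le> card (kerA n A) ^ a * q ^ X"
    using count_ab[OF A, of a b] unfolding X_def Y_def by (simp add: power_add)
  also have "\<dots> \<le> (q ^ s) ^ a * q ^ X" using card_kerA[OF A] unfolding s_def by (simp add: power_mono)
  also have "\<dots> = q ^ (s * a + X)" by (simp only: power_mult[symmetric] power_add)
  finally have h: "real (card (Iso n A a b)) * real q ^ Y \<le> real q ^ (s * a + X)"
    by (metis of_nat_le_iff of_nat_mult of_nat_power)
  have "real (card (Iso n A a b)) \<le> real q ^ (s * a + X) / real q ^ Y"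
    using h qpos by (simp add: field_simps)
  also have "\<dots> = real q powr real (s * a + X) / real q powr real Y"
    by (simp only: powr_realpow[OF qpos])
  also have "\<dots> = real q powr (real (s * a + X) - real Y)"
    by (simp only: powr_diff)
  also have "\<dots> \<le> real q powr (real n ^ 2 / 6 + 3 * real n)"
  proof (rule powr_mono[OF _ q1])
    have rX: "2 * real X = 2 * real b * real n - real b * (real b - 1)" unfolding X_def by (rule sum_diff_real[OF bn])
    have rY1: "real ((a - 1) * a) = real a ^ 2 - real a" by (cases a) (simp_all add: power2_eq_square algebra_simps)
    have rY2: "real ((a + b - 1) * b) = (real a + real b) * real b - real b"
    proof (cases "b = 0")
      case True then show ?thesis by simp
    next
      case False
      then have e: "real (a + b - 1) = real a + real b - 1" by (simp add: of_nat_diff)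
      have "real ((a + b - 1) * b) = real (a + b - 1) * real b" by (simp only: of_nat_mult)
      then show ?thesis unfolding e by (simp add: algebra_simps)
    qed
    have rY: "real Y = real a ^ 2 - real a + ((real a + real b) * real b - real b)"
      unfolding Y_def using rY1 rY2 by simp
    have mi: "real a * (real s - real a - real b) + real b * real n - 3 * real b ^ 2 / 2 \<le> real n ^ 2 / 6"
      using main_ineq[of "real a" "real b" "real s" "real n"] rk unfolding s_def by simp
    have "real (s * a + X) - real Y = real a * (real s - real a - real b) + real b * real n - 3 * real b ^ 2 / 2 + real a + 3 * real b / 2"
      using rX rY by (simp add: power2_eq_square field_simps)
    then show "real (s * a + X) - real Y \<le> real n ^ 2 / 6 + 3 * real n"
      using mi an bn by linarith
  qed
  finally show ?thesis .
qed

lemma card_iso_bound: assumes A: "alt_matrix R n A" and n: "n > 0"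
  and rk: "real (mat_rank R n A) > 2 / 3 * real n"
  shows "real (card {U. isotropic R n A U}) \<le> real q powr (real n ^ 2 / 6 + 5 * real n)"
proof -
  have rle: "mat_rank R n A \<le> n" by (rule rank_le)
  have rk3: "3 * real (n - mat_rank R n A) \<le> real n" using rk rle by (simp add: of_nat_diff)
  let ?P = "real q powr (real n ^ 2 / 6 + 3 * real n)"
  have sub: "{U. isotropic R n A U} \<subseteq> (\<Union>a\<in>{..n}. \<Union>b\<in>{..n}. Iso n A a b)"
    using iso_cover[OF A] by blast
  have fin: "finite (\<Union>a\<in>{..n}. \<Union>b\<in>{..n}. Iso n A a b)" using Iso_finite by auto
  have "card {U. isotropic R n A U} \<le> card (\<Union>a\<in>{..n}. \<Union>b\<in>{..n}. Iso n A a b)"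
    by (rule card_mono[OF fin sub])
  also have "\<dots> \<le> (\<Sum>a\<in>{..n}. card (\<Union>b\<in>{..n}. Iso n A a b))" by (rule card_UN_le) simp
  also have "\<dots> \<le> (\<Sum>a\<in>{..n}. \<Sum>b\<in>{..n}. card (Iso n A a b))"
    by (intro sum_mono card_UN_le) simp
  finally have c1: "real (card {U. isotropic R n A U}) \<le> (\<Sum>a\<in>{..n}. \<Sum>b\<in>{..n}. real (card (Iso n A a b)))"
    by (metis (no_types, lifting) of_nat_le_iff of_nat_sum sum.cong)
  also have "\<dots> \<le> (\<Sum>a\<in>{..n}. \<Sum>b\<in>{..n}. ?P)"
    using Iso_bound[OF A rk3] by (intro sum_mono) auto
  also have "\<dots> = (real n + 1) ^ 2 * ?P" by (simp add: power2_eq_square algebra_simps)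
  also have "\<dots> \<le> real q powr (2 * real n) * ?P"
  proof (rule mult_right_mono)
    have "(real n + 1) ^ 2 \<le> 4 ^ n" using pow4 n by simp
    also have "(4::real) ^ n = 2 ^ (2 * n)" by (simp add: power_mult)
    also have "\<dots> \<le> real q ^ (2 * n)" using q_ge2 by (intro power_mono) auto
    also have "\<dots> = real q powr (2 * real n)" using q_ge2 by (simp add: powr_realpow[symmetric])
    finally show "(real n + 1) ^ 2 \<le> real q powr (2 * real n)" .
  qed simp
  also have "\<dots> = real q powr (real n ^ 2 / 6 + 5 * real n)"
    by (simp add: powr_add[symmetric] algebra_simps)
  finally show ?thesis .
qed

end

theorem lemma7p6:
  shows "\<exists>D::real. D > 0 \<and>
    (\<forall>(R::nat ring) (n::nat) A.
       field R \<longrightarrow> finite (carrier R) \<longrightarrow> n > 0 \<longrightarrow> alt_matrix R n A \<longrightarrow>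
       real (mat_rank R n A) > 2 / 3 * real n \<longrightarrow>
       real (card {U. isotropic R n A U})
         \<le> real (card (carrier R)) powr (real n ^ 2 / 6 + D * real n))"
proof (intro exI[of _ 5] conjI allI impI)
  fix R :: "nat ring" and n :: nat and A
  assume f: "field R" and fin: "finite (carrier R)" and n: "n > 0" and A: "alt_matrix R n A"
    and rk: "real (mat_rank R n A) > 2 / 3 * real n"
  interpret ffld R by (rule ffld.intro[OF f]) (unfold_locales, rule fin)
  show "real (card {U. isotropic R n A U}) \<le> real (card (carrier R)) powr (real n ^ 2 / 6 + 5 * real n)"
    by (rule card_iso_bound[OF A n rk])
qed simp



end
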